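(* Let $k\in\mathbb{Z}\setminus\{0\}$ and $0<x_0<1$. The complete spectrum of the eigenvalue problem $$L_k\Psi=\Phi,\qquad L_k\Phi=\mu\,\Phi,\qquad -x_0\le x\le x_0,$$ (i.e. the case $\epsilon=0$) for $\Psi$ in the space $X_0$ consists of isolated eigenvalues $\mu$ which are (i) real and strictly negative, and (ii) either simple or double, a double eigenvalue having two linearly independent eigenfunctions.
   Context: $L_k=\frac{d}{dx}\left[(1-x^2)\frac{d}{dx}\right]-\frac{k^2}{1-x^2}$. ${\cal H}_k([-x_0,x_0])$ is the space of functions with finite norm $\int_{-x_0}^{x_0}\left[(1-x^2)|\Psi'(x)|^2+\frac{k^2}{1-x^2}|\Psi(x)|^2\right]dx$ and $X_0=\{\Psi\in{\cal H}_k([-x_0,x_0]):\ \Psi(\pm x_0)=\Psi'(\pm x_0)=0\}$. A number $\mu\in\mathbb{C}$ is an eigenvalue if there is a nonzero $\Psi\in X_0$ solving the system classically on $[-x_0,x_0]$ with $\Phi=L_k\Psi$. *)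

theory Defs
  imports "HOL-Analysis.Analysis"
begin

text \<open>Eigenvalue problem  L_k Psi = Phi,  L_k Phi = mu Phi  on [-x0,x0], where
  L_k = d/dx[(1-x^2) d/dx] - k^2/(1-x^2).  A classical solution in X_0:\<close>

definition eigfun :: "int \<Rightarrow> real \<Rightarrow> complex \<Rightarrow> (real \<Rightarrow> complex) \<Rightarrow> bool" where
  "eigfun k x0 \<mu> \<Psi> \<longleftrightarrow>
     (\<exists>\<Psi>1 \<Phi> \<Phi>1.
        (\<forall>x\<in>{-x0..x0}. (\<Psi> has_vector_derivative \<Psi>1 x) (at x within {-x0..x0})) \<and>
        (\<forall>x\<in>{-x0..x0}. ((\<lambda>t. complex_of_real (1 - t\<^sup>2) * \<Psi>1 t) has_vector_derivative
             (\<Phi> x + complex_of_real ((real_of_int k)\<^sup>2 / (1 - x\<^sup>2)) * \<Psi> x)) (at x within {-x0..x0})) \<and>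
        (\<forall>x\<in>{-x0..x0}. (\<Phi> has_vector_derivative \<Phi>1 x) (at x within {-x0..x0})) \<and>
        (\<forall>x\<in>{-x0..x0}. ((\<lambda>t. complex_of_real (1 - t\<^sup>2) * \<Phi>1 t) has_vector_derivative
             (\<mu> * \<Phi> x + complex_of_real ((real_of_int k)\<^sup>2 / (1 - x\<^sup>2)) * \<Phi> x)) (at x within {-x0..x0})) \<and>
        (\<lambda>x. (1 - x\<^sup>2) * (cmod (\<Psi>1 x))\<^sup>2 + (real_of_int k)\<^sup>2 / (1 - x\<^sup>2) * (cmod (\<Psi> x))\<^sup>2)
            integrable_on {-x0..x0} \<and>
        \<Psi> (-x0) = 0 \<and> \<Psi> x0 = 0 \<and> \<Psi>1 (-x0) = 0 \<and> \<Psi>1 x0 = 0)"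

definition is_eigenvalue :: "int \<Rightarrow> real \<Rightarrow> complex \<Rightarrow> bool" where
  "is_eigenvalue k x0 \<mu> \<longleftrightarrow> (\<exists>\<Psi>. eigfun k x0 \<mu> \<Psi> \<and> (\<exists>x\<in>{-x0..x0}. \<Psi> x \<noteq> 0))"

definition simple_eigenvalue :: "int \<Rightarrow> real \<Rightarrow> complex \<Rightarrow> bool" where
  "simple_eigenvalue k x0 \<mu> \<longleftrightarrow>
     (\<exists>\<Psi>. eigfun k x0 \<mu> \<Psi> \<and> (\<exists>x\<in>{-x0..x0}. \<Psi> x \<noteq> 0) \<and>
        (\<forall>\<Theta>. eigfun k x0 \<mu> \<Theta> \<longrightarrow> (\<exists>c. \<forall>x\<in>{-x0..x0}. \<Theta> x = c * \<Psi> x)))"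

definition double_eigenvalue :: "int \<Rightarrow> real \<Rightarrow> complex \<Rightarrow> bool" where
  "double_eigenvalue k x0 \<mu> \<longleftrightarrow>
     (\<exists>\<Psi>1 \<Psi>2. eigfun k x0 \<mu> \<Psi>1 \<and> eigfun k x0 \<mu> \<Psi>2 \<and>
        (\<forall>a b. (\<forall>x\<in>{-x0..x0}. a * \<Psi>1 x + b * \<Psi>2 x = 0) \<longrightarrow> a = 0 \<and> b = 0) \<and>
        (\<forall>\<Theta>. eigfun k x0 \<mu> \<Theta> \<longrightarrow>
            (\<exists>a b. \<forall>x\<in>{-x0..x0}. \<Theta> x = a * \<Psi>1 x + b * \<Psi>2 x)))"

end

theory Submission
  imports Defs
begin

lemma at_interior_deriv:
  fixes f :: "real \<Rightarrow> real"
  assumes "(f has_real_derivative d) (at x within {a..b})" "a < x" "x < b"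
  shows "(f has_real_derivative d) (at x)"
  using assms at_within_Icc_at by metis

lemma cont_from_deriv:
  fixes f :: "real \<Rightarrow> real"
  assumes "\<And>x. x \<in> S \<Longrightarrow> (f has_real_derivative f' x) (at x within S)"
  shows "continuous_on S f"
  using assms by (auto simp: continuous_on_eq_continuous_within intro: DERIV_continuous)

lemma incr_lemma:
  fixes f :: "real \<Rightarrow> real"
  assumes "a \<le> b" "\<And>x. a < x \<Longrightarrow> x < b \<Longrightarrow> (f has_real_derivative f' x) (at x)"
    "\<And>x. a < x \<Longrightarrow> x < b \<Longrightarrow> f' x \<ge> L" "continuous_on {a..b} f"
  shows "f b - f a \<ge> L * (b - a)"
proof -
  have D: "\<exists>y. ((\<lambda>x. f x - L * x) has_real_derivative y) (at x) \<and> 0 \<le> y"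
    if "a < x" "x < b" for x
  proof -
    have "((\<lambda>x. f x - L * x) has_real_derivative (f' x - L)) (at x)"
      using assms(2)[OF that] by (auto intro!: derivative_eq_intros)
    then show ?thesis using assms(3)[OF that] by auto
  qed
  have C: "continuous_on {a..b} (\<lambda>x. f x - L * x)"
    using assms(4) by (intro continuous_intros)
  have "(\<lambda>x. f x - L * x) a \<le> (\<lambda>x. f x - L * x) b"
    using DERIV_nonneg_imp_increasing_open[of a b "\<lambda>x. f x - L * x", OF assms(1) D C] by blast
  then show ?thesis by (simp add: algebra_simps)
qed

lemma zero_lemma:
  fixes f :: "real \<Rightarrow> real"
  assumes "a < b" "\<And>x. x \<in> {a..b} \<Longrightarrow> (f has_real_derivative f' x) (at x within {a..b})"
    "\<And>x. a < x \<Longrightarrow> x < b \<Longrightarrow> f' x \<ge> 0" "f a = f b"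
    "a < x" "x < b"
  shows "f' x = 0"
proof -
  have cont: "continuous_on {a..b} f" by (rule cont_from_deriv) (use assms(2) in auto)
  have mono: "f u \<le> f v" if "a \<le> u" "u \<le> v" "v \<le> b" for u v
  proof -
    have "f v - f u \<ge> 0 * (v - u)"
    proof (rule incr_lemma[where f'=f'])
      fix y assume "u < y" "y < v"
      then show "(f has_real_derivative f' y) (at y)"
        using assms(2)[of y] that at_interior_deriv[of f "f' y" y a b] by auto
      show "0 \<le> f' y" using assms(3)[of y] \<open>u < y\<close> \<open>y < v\<close> that by auto
    qed (use that in \<open>auto intro: continuous_on_subset[OF cont]\<close>)
    then show ?thesis by simp
  qed
  have const: "f y = f x" if "a \<le> y" "y \<le> b" for y
    using mono[of a y] mono[of y b] mono[of a x] mono[of x b] that assms(1,4,5,6) by auto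
  have D: "(f has_real_derivative f' x) (at x)"
    using assms(2)[of x] assms(5,6) at_interior_deriv by auto
  show ?thesis
  proof (rule DERIV_local_const[OF D, of "min (x - a) (b - x)"])
    show "0 < min (x - a) (b - x)" using assms(5,6) by simp
    show "\<forall>y. \<bar>x - y\<bar> < min (x - a) (b - x) \<longrightarrow> f x = f y"
    proof (intro allI impI)
      fix y assume "\<bar>x - y\<bar> < min (x - a) (b - x)"
      then have "a \<le> y" "y \<le> b" by (auto simp: abs_less_iff)
      then show "f x = f y" using const by simp
    qed
  qed
qed

lemma decr_lemma:
  fixes v :: "real \<Rightarrow> real"
  assumes "a \<le> b" "\<And>x. x \<in> {a..b} \<Longrightarrow> (v has_real_derivative v' x) (at x within {a..b})"
    "\<And>x. a < x \<Longrightarrow> x < b \<Longrightarrow> v' x \<le> 0" "x \<in> {a..b}"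
  shows "v x \<le> v a"
proof -
  have cont: "continuous_on {a..b} v" by (rule cont_from_deriv) (use assms(2) in auto)
  have "(\<lambda>y. - v y) x - (\<lambda>y. - v y) a \<ge> 0 * (x - a)"
  proof (rule incr_lemma[where f'="\<lambda>y. - v' y"])
    fix y assume y: "a < y" "y < x"
    then show "((\<lambda>y. - v y) has_real_derivative - v' y) (at y)"
      using assms(2)[of y] assms(4) at_interior_deriv[of v "v' y" y a b]
      by (auto intro!: derivative_eq_intros)
    show "- v' y \<ge> 0" using assms(3)[of y] y assms(4) by auto
  next
    show "continuous_on {a..x} (\<lambda>y. - v y)"
      using assms(4) by (auto intro!: continuous_intros continuous_on_subset[OF cont])
  qed (use assms(4) in auto)
  then show ?thesis by simp
qed

lemma Re_cross_le: "Re (z * cnj w + w * cnj z) \<le> 2 * cmod z * cmod w"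
proof -
  have e: "Re (z * cnj w + w * cnj z) = 2 * Re (z * cnj w)" by simp
  have "Re (z * cnj w) \<le> cmod (z * cnj w)" by (rule complex_Re_le_cmod)
  moreover have "cmod (z * cnj w) = cmod z * cmod w" by (simp add: norm_mult)
  ultimately show ?thesis using e by linarith
qed

lemma Re_sq: "Re (z * cnj z) = (cmod z)\<^sup>2"
  by (metis Re_complex_of_real complex_norm_square)

lemma deriv_normsq:
  fixes F :: "real \<Rightarrow> complex"
  assumes "(F has_vector_derivative F') (at x within S)"
  shows "((\<lambda>y. (cmod (F y))\<^sup>2) has_real_derivative Re (F x * cnj F' + F' * cnj (F x))) (at x within S)"
proof -
  have d: "((\<lambda>y. F y * cnj (F y)) has_vector_derivative (F x * cnj F' + F' * cnj (F x))) (at x within S)"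
    by (rule has_vector_derivative_mult[OF assms has_vector_derivative_cnj[OF assms]])
  have eq: "(\<lambda>y. (cmod (F y))\<^sup>2) = (\<lambda>y. Re (F y * cnj (F y)))" by (simp only: Re_sq)
  show ?thesis unfolding eq by (rule has_field_derivative_Re[OF d])
qed

lemma gronwall2:
  fixes F G p q r :: "real \<Rightarrow> complex"
  assumes ab: "a \<le> b" and C: "0 \<le> C"
    and dF: "\<And>x. x\<in>{a..b} \<Longrightarrow> (F has_vector_derivative (p x * G x)) (at x within {a..b})"
    and dG: "\<And>x. x\<in>{a..b} \<Longrightarrow> (G has_vector_derivative (q x * F x + r x)) (at x within {a..b})"
    and bp: "\<And>x. x\<in>{a..b} \<Longrightarrow> cmod (p x) \<le> C"
    and bq: "\<And>x. x\<in>{a..b} \<Longrightarrow> cmod (q x) \<le> C"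
    and br: "\<And>x. x\<in>{a..b} \<Longrightarrow> cmod (r x) \<le> \<eta>"
    and x: "x \<in> {a..b}"
  shows "(cmod (F x))\<^sup>2 + (cmod (G x))\<^sup>2 \<le> ((cmod (F a))\<^sup>2 + (cmod (G a))\<^sup>2 + \<eta>\<^sup>2) * exp ((2*C+1)*(x - a))"
proof -
  define K where "K = 2*C+1"
  define u where "u y = (cmod (F y))\<^sup>2 + (cmod (G y))\<^sup>2" for y
  define u' where "u' y = Re (F y * cnj (p y * G y) + (p y * G y) * cnj (F y))
      + Re (G y * cnj (q y * F y + r y) + (q y * F y + r y) * cnj (G y))" for y
  have du: "(u has_real_derivative u' y) (at y within {a..b})" if "y \<in> {a..b}" for y
    unfolding u_def u'_def
    by (intro DERIV_add deriv_normsq dF dG that)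
  have bu: "u' y \<le> K * u y + \<eta>\<^sup>2" if y: "y \<in> {a..b}" for y
  proof -
    define nF where "nF = cmod (F y)"
    define nG where "nG = cmod (G y)"
    have "0 \<le> nF" "0 \<le> nG" unfolding nF_def nG_def by auto
    have e: "0 \<le> \<eta>" using br[OF y] norm_ge_zero order_trans by blast
    have h1: "cmod (p y * G y) \<le> C * nG" unfolding nG_def norm_mult
      using bp[OF y] by (simp add: mult_right_mono)
    have h2: "cmod (q y * F y + r y) \<le> C * nF + \<eta>"
    proof -
      have "cmod (q y * F y + r y) \<le> cmod (q y) * nF + cmod (r y)"
        unfolding nF_def by (metis norm_mult norm_triangle_ineq)
      also have "\<dots> \<le> C * nF + \<eta>"
        using bq[OF y] br[OF y] \<open>0 \<le> nF\<close> by (intro add_mono mult_right_mono) auto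
      finally show ?thesis .
    qed
    have A: "Re (F y * cnj (p y * G y) + (p y * G y) * cnj (F y)) \<le> 2 * nF * (C * nG)"
      using Re_cross_le[of "F y" "p y * G y"] h1 \<open>0 \<le> nF\<close> unfolding nF_def
      by (smt (verit, best) mult_left_mono mult_nonneg_nonneg)
    have B: "Re (G y * cnj (q y * F y + r y) + (q y * F y + r y) * cnj (G y)) \<le> 2 * nG * (C * nF + \<eta>)"
      using Re_cross_le[of "G y" "q y * F y + r y"] h2 \<open>0 \<le> nG\<close> unfolding nG_def
      by (smt (verit, best) mult_left_mono mult_nonneg_nonneg)
    have s1: "0 \<le> C * (nF - nG)\<^sup>2" using C by simp
    have s2: "0 \<le> (\<eta> - nG)\<^sup>2" by simp
    have "u' y \<le> 2 * nF * (C * nG) + 2 * nG * (C * nF + \<eta>)"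
      unfolding u'_def using A B by linarith
    also have "\<dots> \<le> K * u y + \<eta>\<^sup>2"
    proof -
      have "K * u y + \<eta>\<^sup>2 - (2 * nF * (C * nG) + 2 * nG * (C * nF + \<eta>))
          = 2 * (C * (nF - nG)\<^sup>2) + (\<eta> - nG)\<^sup>2 + nF\<^sup>2"
        unfolding K_def u_def nF_def[symmetric] nG_def[symmetric]
        by (simp add: power2_eq_square algebra_simps)
      moreover have "0 \<le> nF\<^sup>2" by simp
      ultimately show ?thesis using s1 s2 by linarith
    qed
    finally show ?thesis .
  qed
  define v where "v y = (u y + \<eta>\<^sup>2) * exp (- K * (y - a))" for y
  define v' where "v' y = u' y * exp (- K * (y - a)) + (u y + \<eta>\<^sup>2) * (exp (- K * (y - a)) * (- K))" for y
  have dv: "(v has_real_derivative v' y) (at y within {a..b})" if "y \<in> {a..b}" for y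
    unfolding v_def v'_def
    using du[OF that] by (auto intro!: derivative_eq_intros)
  have nv: "v' y \<le> 0" if "a < y" "y < b" for y
  proof -
    have "u' y - K * (u y + \<eta>\<^sup>2) \<le> 0"
    proof -
      have "0 \<le> C * \<eta>\<^sup>2" using C by simp
      moreover have "K * (u y + \<eta>\<^sup>2) = K * u y + \<eta>\<^sup>2 + 2 * (C * \<eta>\<^sup>2)"
        by (simp add: K_def algebra_simps)
      moreover have "u' y \<le> K * u y + \<eta>\<^sup>2" using bu[of y] that by auto
      ultimately show ?thesis by linarith
    qed
    then have "(u' y - K * (u y + \<eta>\<^sup>2)) * exp (- K * (y - a)) \<le> 0"
      by (simp add: mult_nonpos_nonneg)
    then show ?thesis unfolding v'_def by (simp add: algebra_simps)
  qed
  have "v x \<le> v a" by (rule decr_lemma[OF ab dv nv x])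
  then have "(u x + \<eta>\<^sup>2) * exp (- K * (x - a)) \<le> u a + \<eta>\<^sup>2" unfolding v_def by simp
  then have "(u x + \<eta>\<^sup>2) * exp (- K * (x - a)) * exp (K * (x - a)) \<le> (u a + \<eta>\<^sup>2) * exp (K * (x - a))"
    by (rule mult_right_mono) simp
  moreover have "exp (- K * (x - a)) * exp (K * (x - a)) = 1" by (simp add: exp_add[symmetric])
  ultimately have "u x + \<eta>\<^sup>2 \<le> (u a + \<eta>\<^sup>2) * exp (K * (x - a))"
    by (metis mult.assoc mult.right_neutral)
  then show ?thesis unfolding u_def K_def using zero_le_power2[of \<eta>] by linarith
qed

definition sol :: "int \<Rightarrow> real \<Rightarrow> complex \<Rightarrow> (real \<Rightarrow> complex) \<Rightarrow> (real \<Rightarrow> complex)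
    \<Rightarrow> (real \<Rightarrow> complex) \<Rightarrow> (real \<Rightarrow> complex) \<Rightarrow> bool" where
  "sol k x0 \<mu> \<Psi> \<Psi>1 \<Phi> \<Phi>1 \<longleftrightarrow>
        (\<forall>x\<in>{-x0..x0}. (\<Psi> has_vector_derivative \<Psi>1 x) (at x within {-x0..x0})) \<and>
        (\<forall>x\<in>{-x0..x0}. ((\<lambda>t. complex_of_real (1 - t\<^sup>2) * \<Psi>1 t) has_vector_derivative
             (\<Phi> x + complex_of_real ((real_of_int k)\<^sup>2 / (1 - x\<^sup>2)) * \<Psi> x)) (at x within {-x0..x0})) \<and>
        (\<forall>x\<in>{-x0..x0}. (\<Phi> has_vector_derivative \<Phi>1 x) (at x within {-x0..x0})) \<and>
        (\<forall>x\<in>{-x0..x0}. ((\<lambda>t. complex_of_real (1 - t\<^sup>2) * \<Phi>1 t) has_vector_derivative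
             (\<mu> * \<Phi> x + complex_of_real ((real_of_int k)\<^sup>2 / (1 - x\<^sup>2)) * \<Phi> x)) (at x within {-x0..x0}))"

lemma eigfun_sol:
  assumes "eigfun k x0 \<mu> \<Psi>"
  obtains \<Psi>1 \<Phi> \<Phi>1 where "sol k x0 \<mu> \<Psi> \<Psi>1 \<Phi> \<Phi>1" "\<Psi> (-x0) = 0" "\<Psi> x0 = 0" "\<Psi>1 (-x0) = 0" "\<Psi>1 x0 = 0"
  using assms unfolding eigfun_def sol_def by blast

lemma w_pos:
  fixes x0 x :: real
  assumes "0 < x0" "x0 < 1" "x \<in> {-x0..x0}"
  shows "1 - x0\<^sup>2 \<le> 1 - x\<^sup>2" "0 < 1 - x\<^sup>2" "0 < 1 - x0\<^sup>2"
proof -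
  have "\<bar>x\<bar> \<le> x0" using assms by auto
  then have "\<bar>x\<bar>\<^sup>2 \<le> x0\<^sup>2" by (rule power_mono) simp
  then have "x\<^sup>2 \<le> x0\<^sup>2" by simp
  moreover have "x0\<^sup>2 < 1\<^sup>2" using assms by (intro power_strict_mono) auto
  ultimately show "1 - x0\<^sup>2 \<le> 1 - x\<^sup>2" "0 < 1 - x\<^sup>2" "0 < 1 - x0\<^sup>2" by auto
qed

lemma inv_w_bound:
  fixes x0 x :: real
  assumes "0 < x0" "x0 < 1" "x \<in> {-x0..x0}"
  shows "1 / (1 - x\<^sup>2) \<le> 1 / (1 - x0\<^sup>2)" "0 < 1 / (1 - x\<^sup>2)"
proof -
  show "1 / (1 - x\<^sup>2) \<le> 1 / (1 - x0\<^sup>2)" using w_pos[OF assms]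
    by (simp add: frac_le)
  show "0 < 1 / (1 - x\<^sup>2)" using w_pos[OF assms] by simp
qed

lemma kappa_bound:
  assumes "0 < x0" "x0 < 1" "x \<in> {-x0..x0}"
  shows "cmod (complex_of_real ((real_of_int k)\<^sup>2 / (1 - x\<^sup>2))) \<le> (real_of_int k)\<^sup>2 * (1 / (1 - x0\<^sup>2))"
proof -
  have "0 < 1 - x\<^sup>2" using w_pos[OF assms] by simp
  then have "cmod (complex_of_real ((real_of_int k)\<^sup>2 / (1 - x\<^sup>2))) = (real_of_int k)\<^sup>2 * (1 / (1 - x\<^sup>2))"
    by (simp only: norm_of_real) simp
  also have "\<dots> \<le> (real_of_int k)\<^sup>2 * (1 / (1 - x0\<^sup>2))"
    using inv_w_bound[OF assms] by (intro mult_left_mono) auto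
  finally show ?thesis .
qed

lemma sys:
  assumes "sol k x0 \<mu> \<Psi> \<Psi>1 \<Phi> \<Phi>1" "0 < x0" "x0 < 1" "x \<in> {-x0..x0}"
  shows "(\<Phi> has_vector_derivative (complex_of_real (1 / (1 - x\<^sup>2)) * (complex_of_real (1 - x\<^sup>2) * \<Phi>1 x))) (at x within {-x0..x0})"
    "((\<lambda>t. complex_of_real (1 - t\<^sup>2) * \<Phi>1 t) has_vector_derivative
        ((\<mu> + complex_of_real ((real_of_int k)\<^sup>2 / (1 - x\<^sup>2))) * \<Phi> x + 0)) (at x within {-x0..x0})"
    "(\<Psi> has_vector_derivative (complex_of_real (1 / (1 - x\<^sup>2)) * (complex_of_real (1 - x\<^sup>2) * \<Psi>1 x))) (at x within {-x0..x0})"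
    "((\<lambda>t. complex_of_real (1 - t\<^sup>2) * \<Psi>1 t) has_vector_derivative
        (complex_of_real ((real_of_int k)\<^sup>2 / (1 - x\<^sup>2)) * \<Psi> x + \<Phi> x)) (at x within {-x0..x0})"
proof -
  have w: "1 - x\<^sup>2 \<noteq> 0" using w_pos[OF assms(2-4)] by simp
  have e: "complex_of_real (1 / (1 - x\<^sup>2)) * (complex_of_real (1 - x\<^sup>2) * z) = z" for z
  proof -
    have r: "1 / (1 - x\<^sup>2) * (1 - x\<^sup>2) = 1" using w by simp
    show ?thesis by (simp only: mult.assoc[symmetric] of_real_mult[symmetric] r of_real_1 mult_1_left)
  qed
  show "(\<Phi> has_vector_derivative (complex_of_real (1 / (1 - x\<^sup>2)) * (complex_of_real (1 - x\<^sup>2) * \<Phi>1 x))) (at x within {-x0..x0})"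
    using assms(1,4) unfolding sol_def e by blast
  show "(\<Psi> has_vector_derivative (complex_of_real (1 / (1 - x\<^sup>2)) * (complex_of_real (1 - x\<^sup>2) * \<Psi>1 x))) (at x within {-x0..x0})"
    using assms(1,4) unfolding sol_def e by blast
  show "((\<lambda>t. complex_of_real (1 - t\<^sup>2) * \<Phi>1 t) has_vector_derivative
        ((\<mu> + complex_of_real ((real_of_int k)\<^sup>2 / (1 - x\<^sup>2))) * \<Phi> x + 0)) (at x within {-x0..x0})"
    using assms(1,4) unfolding sol_def by (simp add: distrib_right)
  show "((\<lambda>t. complex_of_real (1 - t\<^sup>2) * \<Psi>1 t) has_vector_derivative
        (complex_of_real ((real_of_int k)\<^sup>2 / (1 - x\<^sup>2)) * \<Psi> x + \<Phi> x)) (at x within {-x0..x0})"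
    using assms(1,4) unfolding sol_def by (simp add: add.commute)
qed

definition Cb :: "int \<Rightarrow> real \<Rightarrow> complex \<Rightarrow> real" where
  "Cb k x0 \<mu> = 1 / (1 - x0\<^sup>2) + cmod \<mu> + (real_of_int k)\<^sup>2 * (1 / (1 - x0\<^sup>2))"

lemma Cb_bounds:
  assumes "0 < x0" "x0 < 1" "x \<in> {-x0..x0}"
  shows "0 \<le> Cb k x0 \<mu>"
    "cmod (complex_of_real (1 / (1 - x\<^sup>2))) \<le> Cb k x0 \<mu>"
    "cmod (\<mu> + complex_of_real ((real_of_int k)\<^sup>2 / (1 - x\<^sup>2))) \<le> Cb k x0 \<mu>"
    "cmod (complex_of_real ((real_of_int k)\<^sup>2 / (1 - x\<^sup>2))) \<le> Cb k x0 \<mu>"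
proof -
  have a: "0 \<le> 1 / (1 - x0\<^sup>2)" using inv_w_bound[OF assms] by linarith
  have b: "0 \<le> (real_of_int k)\<^sup>2 * (1 / (1 - x0\<^sup>2))" using a by simp
  show "0 \<le> Cb k x0 \<mu>" unfolding Cb_def using a b by simp
  show "cmod (complex_of_real (1 / (1 - x\<^sup>2))) \<le> Cb k x0 \<mu>"
  proof -
    have "cmod (complex_of_real (1 / (1 - x\<^sup>2))) = 1 / (1 - x\<^sup>2)"
      by (simp only: norm_of_real abs_of_pos[OF inv_w_bound(2)[OF assms]])
    then show ?thesis unfolding Cb_def using inv_w_bound[OF assms] b norm_ge_zero[of \<mu>] by linarith
  qed
  show "cmod (\<mu> + complex_of_real ((real_of_int k)\<^sup>2 / (1 - x\<^sup>2))) \<le> Cb k x0 \<mu>"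
    unfolding Cb_def using kappa_bound[OF assms, of k] a norm_triangle_ineq[of \<mu> "complex_of_real ((real_of_int k)\<^sup>2 / (1 - x\<^sup>2))"] by linarith
  show "cmod (complex_of_real ((real_of_int k)\<^sup>2 / (1 - x\<^sup>2))) \<le> Cb k x0 \<mu>"
    unfolding Cb_def using kappa_bound[OF assms, of k] a norm_ge_zero[of \<mu>] by linarith
qed

lemma uniq:
  assumes S: "sol k x0 \<mu> \<Psi> \<Psi>1 \<Phi> \<Phi>1" and x0: "0 < x0" "x0 < 1"
    and z: "\<Phi> (-x0) = 0" "\<Phi>1 (-x0) = 0" "\<Psi> (-x0) = 0" "\<Psi>1 (-x0) = 0"
    and x: "x \<in> {-x0..x0}"
  shows "\<Psi> x = 0 \<and> \<Phi> x = 0"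
proof -
  have ab: "-x0 \<le> x0" using x0 by simp
  have P0: "\<Phi> y = 0" if y: "y \<in> {-x0..x0}" for y
  proof -
    have "(cmod (\<Phi> y))\<^sup>2 + (cmod (complex_of_real (1 - y\<^sup>2) * \<Phi>1 y))\<^sup>2
       \<le> ((cmod (\<Phi> (-x0)))\<^sup>2 + (cmod (complex_of_real (1 - (-x0)\<^sup>2) * \<Phi>1 (-x0)))\<^sup>2 + 0\<^sup>2)
          * exp ((2 * Cb k x0 \<mu> + 1) * (y - (-x0)))"
      by (rule gronwall2[where F=\<Phi> and G="\<lambda>t. complex_of_real (1 - t\<^sup>2) * \<Phi>1 t",
            OF ab Cb_bounds(1)[OF x0 y] sys(1)[OF S x0] sys(2)[OF S x0]
            Cb_bounds(2)[OF x0] Cb_bounds(3)[OF x0] _ y]) auto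
    then have "(cmod (\<Phi> y))\<^sup>2 + (cmod (complex_of_real (1 - y\<^sup>2) * \<Phi>1 y))\<^sup>2 \<le> 0"
      using z by simp
    then show ?thesis by (simp only: sum_power2_le_zero_iff) simp
  qed
  have "(cmod (\<Psi> x))\<^sup>2 + (cmod (complex_of_real (1 - x\<^sup>2) * \<Psi>1 x))\<^sup>2
       \<le> ((cmod (\<Psi> (-x0)))\<^sup>2 + (cmod (complex_of_real (1 - (-x0)\<^sup>2) * \<Psi>1 (-x0)))\<^sup>2 + 0\<^sup>2)
          * exp ((2 * Cb k x0 \<mu> + 1) * (x - (-x0)))"
    by (rule gronwall2[where F=\<Psi> and G="\<lambda>t. complex_of_real (1 - t\<^sup>2) * \<Psi>1 t",
            OF ab Cb_bounds(1)[OF x0 x] sys(3)[OF S x0] sys(4)[OF S x0]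
            Cb_bounds(2)[OF x0] Cb_bounds(4)[OF x0] _ x]) (auto simp: P0)
  then have "(cmod (\<Psi> x))\<^sup>2 + (cmod (complex_of_real (1 - x\<^sup>2) * \<Psi>1 x))\<^sup>2 \<le> 0"
    using z by simp
  then show ?thesis using P0[OF x] by (simp only: sum_power2_le_zero_iff) simp
qed

lemma sol_lin:
  assumes "sol k x0 \<mu> A A1 B B1" "sol k x0 \<mu> C C1 D D1"
  shows "sol k x0 \<mu> (\<lambda>x. \<alpha> * A x + \<beta> * C x) (\<lambda>x. \<alpha> * A1 x + \<beta> * C1 x)
           (\<lambda>x. \<alpha> * B x + \<beta> * D x) (\<lambda>x. \<alpha> * B1 x + \<beta> * D1 x)"
proof -
  have e1: "(\<lambda>t. complex_of_real (1 - t\<^sup>2) * (\<alpha> * A1 t + \<beta> * C1 t))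
      = (\<lambda>t. \<alpha> * (complex_of_real (1 - t\<^sup>2) * A1 t) + \<beta> * (complex_of_real (1 - t\<^sup>2) * C1 t))"
    by (simp add: algebra_simps)
  have e2: "(\<lambda>t. complex_of_real (1 - t\<^sup>2) * (\<alpha> * B1 t + \<beta> * D1 t))
      = (\<lambda>t. \<alpha> * (complex_of_real (1 - t\<^sup>2) * B1 t) + \<beta> * (complex_of_real (1 - t\<^sup>2) * D1 t))"
    by (simp add: algebra_simps)
  have a1: "\<And>x. x \<in> {-x0..x0} \<Longrightarrow> (A has_vector_derivative A1 x) (at x within {-x0..x0})"
   and a2: "\<And>x. x \<in> {-x0..x0} \<Longrightarrow> ((\<lambda>t. complex_of_real (1 - t\<^sup>2) * A1 t) has_vector_derivative
             (B x + complex_of_real ((real_of_int k)\<^sup>2 / (1 - x\<^sup>2)) * A x)) (at x within {-x0..x0})"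
   and a3: "\<And>x. x \<in> {-x0..x0} \<Longrightarrow> (B has_vector_derivative B1 x) (at x within {-x0..x0})"
   and a4: "\<And>x. x \<in> {-x0..x0} \<Longrightarrow> ((\<lambda>t. complex_of_real (1 - t\<^sup>2) * B1 t) has_vector_derivative
             (\<mu> * B x + complex_of_real ((real_of_int k)\<^sup>2 / (1 - x\<^sup>2)) * B x)) (at x within {-x0..x0})"
    using assms(1) unfolding sol_def by blast+
  have c1: "\<And>x. x \<in> {-x0..x0} \<Longrightarrow> (C has_vector_derivative C1 x) (at x within {-x0..x0})"
   and c2: "\<And>x. x \<in> {-x0..x0} \<Longrightarrow> ((\<lambda>t. complex_of_real (1 - t\<^sup>2) * C1 t) has_vector_derivative
             (D x + complex_of_real ((real_of_int k)\<^sup>2 / (1 - x\<^sup>2)) * C x)) (at x within {-x0..x0})"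
   and c3: "\<And>x. x \<in> {-x0..x0} \<Longrightarrow> (D has_vector_derivative D1 x) (at x within {-x0..x0})"
   and c4: "\<And>x. x \<in> {-x0..x0} \<Longrightarrow> ((\<lambda>t. complex_of_real (1 - t\<^sup>2) * D1 t) has_vector_derivative
             (\<mu> * D x + complex_of_real ((real_of_int k)\<^sup>2 / (1 - x\<^sup>2)) * D x)) (at x within {-x0..x0})"
    using assms(2) unfolding sol_def by blast+
  show ?thesis
    unfolding sol_def e1 e2
  proof (intro conjI ballI)
    fix x assume x: "x \<in> {-x0..x0}"
    show "((\<lambda>x. \<alpha> * A x + \<beta> * C x) has_vector_derivative \<alpha> * A1 x + \<beta> * C1 x) (at x within {-x0..x0})"
      by (intro has_vector_derivative_add has_vector_derivative_mult_right a1 c1 x)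
  next
    fix x assume x: "x \<in> {-x0..x0}"
    show "((\<lambda>x. \<alpha> * B x + \<beta> * D x) has_vector_derivative \<alpha> * B1 x + \<beta> * D1 x) (at x within {-x0..x0})"
      by (intro has_vector_derivative_add has_vector_derivative_mult_right a3 c3 x)
  next
    fix x assume x: "x \<in> {-x0..x0}"
    show "((\<lambda>t. \<alpha> * (complex_of_real (1 - t\<^sup>2) * A1 t) + \<beta> * (complex_of_real (1 - t\<^sup>2) * C1 t)) has_vector_derivative
          \<alpha> * B x + \<beta> * D x + complex_of_real ((real_of_int k)\<^sup>2 / (1 - x\<^sup>2)) * (\<alpha> * A x + \<beta> * C x))
          (at x within {-x0..x0})"
      by (rule has_vector_derivative_eq_rhs[OF has_vector_derivative_add[OF
          has_vector_derivative_mult_right[OF a2[OF x]] has_vector_derivative_mult_right[OF c2[OF x]]]])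
        (simp add: algebra_simps add_divide_distrib)
  next
    fix x assume x: "x \<in> {-x0..x0}"
    show "((\<lambda>t. \<alpha> * (complex_of_real (1 - t\<^sup>2) * B1 t) + \<beta> * (complex_of_real (1 - t\<^sup>2) * D1 t)) has_vector_derivative
          \<mu> * (\<alpha> * B x + \<beta> * D x) + complex_of_real ((real_of_int k)\<^sup>2 / (1 - x\<^sup>2)) * (\<alpha> * B x + \<beta> * D x))
          (at x within {-x0..x0})"
      by (rule has_vector_derivative_eq_rhs[OF has_vector_derivative_add[OF
          has_vector_derivative_mult_right[OF a4[OF x]] has_vector_derivative_mult_right[OF c4[OF x]]]])
        (simp add: algebra_simps add_divide_distrib)
  qed
qed

lemma green:
  fixes f f1 g g1 :: "real \<Rightarrow> complex" and Lf Lg :: complex and \<kappa> :: real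
  assumes f1: "(f has_vector_derivative f1 x) (at x within S)"
    and f2: "((\<lambda>t. complex_of_real (1 - t\<^sup>2) * f1 t) has_vector_derivative (Lf + complex_of_real \<kappa> * f x)) (at x within S)"
    and g1: "(g has_vector_derivative g1 x) (at x within S)"
    and g2: "((\<lambda>t. complex_of_real (1 - t\<^sup>2) * g1 t) has_vector_derivative (Lg + complex_of_real \<kappa> * g x)) (at x within S)"
  shows "((\<lambda>t. complex_of_real (1 - t\<^sup>2) * f1 t * cnj (g t) - f t * cnj (complex_of_real (1 - t\<^sup>2) * g1 t))
     has_vector_derivative (Lf * cnj (g x) - f x * cnj Lg)) (at x within S)"
  by (rule has_vector_derivative_eq_rhs[OF has_vector_derivative_diff[OF
        has_vector_derivative_mult[OF f2 has_vector_derivative_cnj[OF g1]]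
        has_vector_derivative_mult[OF f1 has_vector_derivative_cnj[OF g2]]]])
     (simp add: algebra_simps)

lemma energy_deriv:
  fixes f f1 :: "real \<Rightarrow> complex" and Lf :: complex and \<kappa> :: real
  assumes f1: "(f has_vector_derivative f1 x) (at x within S)"
    and f2: "((\<lambda>t. complex_of_real (1 - t\<^sup>2) * f1 t) has_vector_derivative (Lf + complex_of_real \<kappa> * f x)) (at x within S)"
  shows "((\<lambda>t. complex_of_real (1 - t\<^sup>2) * f1 t * cnj (f t))
     has_vector_derivative (Lf * cnj (f x) + complex_of_real ((1 - x\<^sup>2) * (cmod (f1 x))\<^sup>2 + \<kappa> * (cmod (f x))\<^sup>2))) (at x within S)"
proof -
  have e: "complex_of_real ((1 - x\<^sup>2) * (cmod (f1 x))\<^sup>2 + \<kappa> * (cmod (f x))\<^sup>2)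
      = complex_of_real (1 - x\<^sup>2) * (f1 x * cnj (f1 x)) + complex_of_real \<kappa> * (f x * cnj (f x))"
    by (simp only: of_real_add of_real_mult complex_norm_square)
  show ?thesis unfolding e
    by (rule has_vector_derivative_eq_rhs[OF
        has_vector_derivative_mult[OF f2 has_vector_derivative_cnj[OF f1]]])
     (simp add: algebra_simps)
qed

lemma real_neg:
  assumes S: "sol k x0 \<mu> \<Psi> \<Psi>1 \<Phi> \<Phi>1" and x0: "0 < x0" "x0 < 1" and k: "k \<noteq> 0"
    and bc: "\<Psi> (-x0) = 0" "\<Psi> x0 = 0" "\<Psi>1 (-x0) = 0" "\<Psi>1 x0 = 0"
    and x1: "x1 \<in> {-x0..x0}" "\<Psi> x1 \<noteq> 0"
  shows "Im \<mu> = 0 \<and> Re \<mu> < 0"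
proof -
  define I where "I = {-x0..x0}"
  define \<kappa> where "\<kappa> x = (real_of_int k)\<^sup>2 / (1 - x\<^sup>2)" for x
  define e where "e x = (1 - x\<^sup>2) * (cmod (\<Psi>1 x))\<^sup>2 + \<kappa> x * (cmod (\<Psi> x))\<^sup>2" for x
  define Q where "Q t = complex_of_real (1 - t\<^sup>2) * \<Psi>1 t" for t
  define R where "R t = complex_of_real (1 - t\<^sup>2) * \<Phi>1 t" for t
  define D where "D t = \<mu> * (Q t * cnj (\<Psi> t)) - (R t * cnj (\<Psi> t) - \<Phi> t * cnj (Q t))" for t
  have s1: "\<And>x. x \<in> I \<Longrightarrow> (\<Psi> has_vector_derivative \<Psi>1 x) (at x within I)"
   and s2: "\<And>x. x \<in> I \<Longrightarrow> ((\<lambda>t. complex_of_real (1 - t\<^sup>2) * \<Psi>1 t) has_vector_derivative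
             (\<Phi> x + complex_of_real (\<kappa> x) * \<Psi> x)) (at x within I)"
   and s3: "\<And>x. x \<in> I \<Longrightarrow> (\<Phi> has_vector_derivative \<Phi>1 x) (at x within I)"
   and s4: "\<And>x. x \<in> I \<Longrightarrow> ((\<lambda>t. complex_of_real (1 - t\<^sup>2) * \<Phi>1 t) has_vector_derivative
             (\<mu> * \<Phi> x + complex_of_real (\<kappa> x) * \<Phi> x)) (at x within I)"
    using S unfolding sol_def I_def \<kappa>_def by blast+
  have dW: "((\<lambda>t. R t * cnj (\<Psi> t) - \<Phi> t * cnj (Q t)) has_vector_derivative
      (\<mu> * \<Phi> x * cnj (\<Psi> x) - \<Phi> x * cnj (\<Phi> x))) (at x within I)" if "x \<in> I" for x
    unfolding R_def Q_def by (rule green[OF s3[OF that] s4[OF that] s1[OF that] s2[OF that]])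
  have dE: "((\<lambda>t. Q t * cnj (\<Psi> t)) has_vector_derivative
      (\<Phi> x * cnj (\<Psi> x) + complex_of_real (e x))) (at x within I)" if "x \<in> I" for x
    unfolding Q_def e_def by (rule energy_deriv[OF s1[OF that] s2[OF that]])
  have dD: "(D has_vector_derivative (\<mu> * complex_of_real (e x) + complex_of_real ((cmod (\<Phi> x))\<^sup>2))) (at x within I)"
    if "x \<in> I" for x
    unfolding D_def
    by (rule has_vector_derivative_eq_rhs[OF has_vector_derivative_diff[OF
          has_vector_derivative_mult_right[OF dE[OF that]] dW[OF that]]])
       (simp add: algebra_simps, metis complex_norm_square of_real_power)
  have Dends: "D (-x0) = 0" "D x0 = 0" unfolding D_def Q_def using bc by simp_all
  have Eends: "Re (Q (-x0) * cnj (\<Psi> (-x0))) = 0" "Re (Q x0 * cnj (\<Psi> x0)) = 0"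
    unfolding Q_def using bc by simp_all
  have ab: "-x0 < x0" using x0 by simp
  have e_nn: "0 \<le> e x" if "x \<in> I" for x
    using w_pos[OF x0 that[unfolded I_def]] unfolding e_def \<kappa>_def by simp
  have x1i: "-x0 < x1" "x1 < x0"
    using x1 bc by (auto simp: less_le)
  have e_pos: "0 < e x1"
  proof -
    have w: "0 < 1 - x1\<^sup>2" using w_pos[OF x0 x1(1)] by simp
    have "0 < (real_of_int k)\<^sup>2" using k by simp
    then have "0 < \<kappa> x1" unfolding \<kappa>_def using w by simp
    moreover have "0 < (cmod (\<Psi> x1))\<^sup>2" using x1(2) by simp
    ultimately have "0 < \<kappa> x1 * (cmod (\<Psi> x1))\<^sup>2" by simp
    moreover have "0 \<le> (1 - x1\<^sup>2) * (cmod (\<Psi>1 x1))\<^sup>2" using w by simp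
    ultimately show ?thesis unfolding e_def by linarith
  qed
  have ImD: "((\<lambda>t. Im (D t)) has_real_derivative (Im \<mu> * e x)) (at x within I)" if "x \<in> I" for x
    using has_field_derivative_Im[OF dD[OF that]] by simp
  have ReD: "((\<lambda>t. Re (D t)) has_real_derivative (Re \<mu> * e x + (cmod (\<Phi> x))\<^sup>2)) (at x within I)" if "x \<in> I" for x
    using has_field_derivative_Re[OF dD[OF that]] by simp
  have im: "Im \<mu> = 0"
  proof (rule ccontr)
    assume ne: "Im \<mu> \<noteq> 0"
    show False
    proof (cases "Im \<mu> > 0")
      case True
      have "Im \<mu> * e x1 = 0"
        by (rule zero_lemma[OF ab, where f="\<lambda>t. Im (D t)"])
           (use ImD e_nn True Dends x1i in \<open>auto simp: I_def\<close>)
      then show False using True e_pos by simp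
    next
      case False
      then have neg: "Im \<mu> < 0" using ne by simp
      have ImDn: "((\<lambda>t. - Im (D t)) has_real_derivative - (Im \<mu> * e x)) (at x within I)" if "x \<in> I" for x
        by (rule DERIV_minus[OF ImD[OF that]])
      have "- (Im \<mu> * e x1) = 0"
        by (rule zero_lemma[OF ab, where f="\<lambda>t. - Im (D t)" and f'="\<lambda>x. - (Im \<mu> * e x)" and x=x1])
           (use ImDn e_nn neg Dends x1i in \<open>auto simp: I_def intro!: mult_nonpos_nonneg\<close>)
      then show False using neg e_pos by simp
    qed
  qed
  have re: "Re \<mu> < 0"
  proof (rule ccontr)
    assume "\<not> Re \<mu> < 0"
    then have nn: "0 \<le> Re \<mu>" by simp
    have z: "Re \<mu> * e x + (cmod (\<Phi> x))\<^sup>2 = 0" if "-x0 < x" "x < x0" for x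
      by (rule zero_lemma[OF ab, where f="\<lambda>t. Re (D t)"])
         (use ReD e_nn nn Dends that in \<open>auto simp: I_def\<close>)
    show False
    proof (cases "Re \<mu> > 0")
      case True
      have "0 < Re \<mu> * e x1 + (cmod (\<Phi> x1))\<^sup>2"
        using True e_pos by (simp add: add_pos_nonneg)
      then show False using z[OF x1i] by simp
    next
      case False
      then have r0: "Re \<mu> = 0" using nn by simp
      have P0: "\<Phi> x = 0" if "-x0 < x" "x < x0" for x
        using z[OF that] r0 by simp
      have RE: "((\<lambda>t. Re (Q t * cnj (\<Psi> t))) has_real_derivative (Re (\<Phi> x * cnj (\<Psi> x)) + e x)) (at x within I)"
        if "x \<in> I" for x
        using has_field_derivative_Re[OF dE[OF that]] by simp
      have "Re (\<Phi> x1 * cnj (\<Psi> x1)) + e x1 = 0"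
        by (rule zero_lemma[OF ab, where f="\<lambda>t. Re (Q t * cnj (\<Psi> t))"])
           (use RE e_nn P0 Eends x1i in \<open>auto simp: I_def\<close>)
      then show False using P0[OF x1i] e_pos by simp
    qed
  qed
  show ?thesis using im re by simp
qed

lemma zero_deriv:
  fixes f :: "real \<Rightarrow> complex"
  assumes "a < b" "x \<in> {a..b}" "\<And>y. y \<in> {a..b} \<Longrightarrow> f y = 0"
    "(f has_vector_derivative d) (at x within {a..b})"
  shows "d = 0"
proof -
  have "((\<lambda>_. 0) has_vector_derivative d) (at x within {a..b})"
    by (rule has_vector_derivative_transform[OF assms(2) _ assms(4)]) (use assms(3) in simp)
  moreover have "((\<lambda>_. 0) has_vector_derivative 0) (at x within {a..b})"
    by (rule has_vector_derivative_const)
  ultimately show ?thesis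
    using vector_derivative_unique_within_closed_interval[of a b x "\<lambda>_. 0::complex" d 0] assms(1,2)
    by simp
qed

lemma zero_data:
  assumes S: "sol k x0 \<mu> \<Psi> \<Psi>1 \<Phi> \<Phi>1" and x0: "0 < x0" "x0 < 1"
    and z: "\<And>x. x \<in> {-x0..x0} \<Longrightarrow> \<Psi> x = 0"
  shows "\<Phi> (-x0) = 0 \<and> \<Phi>1 (-x0) = 0"
proof -
  have ab: "-x0 < x0" using x0 by simp
  have s1: "\<And>x. x \<in> {-x0..x0} \<Longrightarrow> (\<Psi> has_vector_derivative \<Psi>1 x) (at x within {-x0..x0})"
   and s2: "\<And>x. x \<in> {-x0..x0} \<Longrightarrow> ((\<lambda>t. complex_of_real (1 - t\<^sup>2) * \<Psi>1 t) has_vector_derivative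
             (\<Phi> x + complex_of_real ((real_of_int k)\<^sup>2 / (1 - x\<^sup>2)) * \<Psi> x)) (at x within {-x0..x0})"
   and s3: "\<And>x. x \<in> {-x0..x0} \<Longrightarrow> (\<Phi> has_vector_derivative \<Phi>1 x) (at x within {-x0..x0})"
    using S unfolding sol_def by blast+
  have z1: "\<Psi>1 x = 0" if "x \<in> {-x0..x0}" for x
    by (rule zero_deriv[OF ab that z s1[OF that]])
  have z2: "\<Phi> x = 0" if "x \<in> {-x0..x0}" for x
  proof -
    have "\<Phi> x + complex_of_real ((real_of_int k)\<^sup>2 / (1 - x\<^sup>2)) * \<Psi> x = 0"
      by (rule zero_deriv[OF ab that _ s2[OF that]]) (simp add: z1)
    then show ?thesis using z[OF that] by simp
  qed
  have z3: "\<Phi>1 x = 0" if "x \<in> {-x0..x0}" for x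
    by (rule zero_deriv[OF ab that z2 s3[OF that]])
  show ?thesis using z2 z3 ab by simp
qed

lemma cramer:
  fixes p p1 q q1 y y1 :: complex
  assumes "p * q1 - p1 * q \<noteq> 0"
  shows "y = (y * q1 - y1 * q) / (p * q1 - p1 * q) * p + (p * y1 - p1 * y) / (p * q1 - p1 * q) * q"
    "y1 = (y * q1 - y1 * q) / (p * q1 - p1 * q) * p1 + (p * y1 - p1 * y) / (p * q1 - p1 * q) * q1"
proof -
  define d where "d = p * q1 - p1 * q"
  have d: "d \<noteq> 0" using assms d_def by simp
  have "(y * q1 - y1 * q) / d * p + (p * y1 - p1 * y) / d * q = ((y * q1 - y1 * q) * p + (p * y1 - p1 * y) * q) / d"
    by (simp add: add_divide_distrib)
  also have "(y * q1 - y1 * q) * p + (p * y1 - p1 * y) * q = y * d" by (simp add: d_def algebra_simps)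
  finally show "y = (y * q1 - y1 * q) / (p * q1 - p1 * q) * p + (p * y1 - p1 * y) / (p * q1 - p1 * q) * q"
    using d unfolding d_def by simp
  have "(y * q1 - y1 * q) / d * p1 + (p * y1 - p1 * y) / d * q1 = ((y * q1 - y1 * q) * p1 + (p * y1 - p1 * y) * q1) / d"
    by (simp add: add_divide_distrib)
  also have "(y * q1 - y1 * q) * p1 + (p * y1 - p1 * y) * q1 = y1 * d" by (simp add: d_def algebra_simps)
  finally show "y1 = (y * q1 - y1 * q) / (p * q1 - p1 * q) * p1 + (p * y1 - p1 * y) / (p * q1 - p1 * q) * q1"
    using d unfolding d_def by simp
qed

lemma simple_or_double:
  assumes x0: "0 < x0" "x0 < 1" and ev: "is_eigenvalue k x0 \<mu>"
  shows "simple_eigenvalue k x0 \<mu> \<or> double_eigenvalue k x0 \<mu>"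
proof -
  define I where "I = {-x0..x0}"
  obtain \<Psi> x1 where ef: "eigfun k x0 \<mu> \<Psi>" and x1: "x1 \<in> I" "\<Psi> x1 \<noteq> 0"
    using ev unfolding is_eigenvalue_def I_def by blast
  obtain \<Psi>1 \<Phi> \<Phi>1 where S: "sol k x0 \<mu> \<Psi> \<Psi>1 \<Phi> \<Phi>1" and bc: "\<Psi> (-x0) = 0" "\<Psi>1 (-x0) = 0"
    using eigfun_sol[OF ef] by metis
  have vnz: "\<not> (\<Phi> (-x0) = 0 \<and> \<Phi>1 (-x0) = 0)"
    using uniq[OF S x0 _ _ bc, of x1] x1 unfolding I_def by blast
  have red: "\<Theta> x = a * \<Psi> x + b * \<Psi>' x"
    if S1: "sol k x0 \<mu> \<Theta> \<Theta>1 \<Xi> \<Xi>1" and S2: "sol k x0 \<mu> \<Psi>' \<Psi>1' \<Phi>' \<Phi>1'"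
      and b1: "\<Theta> (-x0) = 0" "\<Theta>1 (-x0) = 0" and b2: "\<Psi>' (-x0) = 0" "\<Psi>1' (-x0) = 0"
      and d1: "\<Xi> (-x0) = a * \<Phi> (-x0) + b * \<Phi>' (-x0)"
      and d2: "\<Xi>1 (-x0) = a * \<Phi>1 (-x0) + b * \<Phi>1' (-x0)"
      and x: "x \<in> I"
    for \<Theta> \<Theta>1 \<Xi> \<Xi>1 \<Psi>' \<Psi>1' \<Phi>' \<Phi>1' a b x
  proof -
    have S3: "sol k x0 \<mu> (\<lambda>x. 1 * \<Theta> x + (-a) * \<Psi> x) (\<lambda>x. 1 * \<Theta>1 x + (-a) * \<Psi>1 x)
           (\<lambda>x. 1 * \<Xi> x + (-a) * \<Phi> x) (\<lambda>x. 1 * \<Xi>1 x + (-a) * \<Phi>1 x)"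
      by (rule sol_lin[OF S1 S])
    note S4 = sol_lin[OF S3 S2, of 1 "-b"]
    have "(\<lambda>x. 1 * (1 * \<Theta> x + - a * \<Psi> x) + - b * \<Psi>' x) x = 0"
      by (rule conjunct1[OF uniq[OF S4 x0]]) (use b1 b2 bc d1 d2 x in \<open>auto simp: I_def\<close>)
    then show ?thesis by (simp add: algebra_simps)
  qed
  show ?thesis
  proof (cases "\<exists>\<Theta> \<Theta>1 \<Xi> \<Xi>1. eigfun k x0 \<mu> \<Theta> \<and> sol k x0 \<mu> \<Theta> \<Theta>1 \<Xi> \<Xi>1 \<and> \<Theta> (-x0) = 0 \<and> \<Theta>1 (-x0) = 0
                 \<and> \<Phi> (-x0) * \<Xi>1 (-x0) - \<Phi>1 (-x0) * \<Xi> (-x0) \<noteq> 0")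
    case True
    then obtain \<Theta> \<Theta>1 \<Xi> \<Xi>1 where efT: "eigfun k x0 \<mu> \<Theta>" and ST: "sol k x0 \<mu> \<Theta> \<Theta>1 \<Xi> \<Xi>1"
      and bT: "\<Theta> (-x0) = 0" "\<Theta>1 (-x0) = 0"
      and det: "\<Phi> (-x0) * \<Xi>1 (-x0) - \<Phi>1 (-x0) * \<Xi> (-x0) \<noteq> 0" by blast
    define dt where "dt = \<Phi> (-x0) * \<Xi>1 (-x0) - \<Phi>1 (-x0) * \<Xi> (-x0)"
    have ind: "\<forall>a b. (\<forall>x\<in>{-x0..x0}. a * \<Psi> x + b * \<Theta> x = 0) \<longrightarrow> a = 0 \<and> b = 0"
    proof (intro allI impI)
      fix a b assume h: "\<forall>x\<in>{-x0..x0}. a * \<Psi> x + b * \<Theta> x = 0"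
      have "\<Phi> (-x0) * a + \<Xi> (-x0) * b = 0 \<and> \<Phi>1 (-x0) * a + \<Xi>1 (-x0) * b = 0"
        using zero_data[OF sol_lin[OF S ST, of a b] x0] h by (simp add: algebra_simps)
      then have e1: "\<Phi> (-x0) * a + \<Xi> (-x0) * b = 0" and e2: "\<Phi>1 (-x0) * a + \<Xi>1 (-x0) * b = 0"
        by auto
      have "dt * a = \<Xi>1 (-x0) * (\<Phi> (-x0) * a + \<Xi> (-x0) * b) - \<Xi> (-x0) * (\<Phi>1 (-x0) * a + \<Xi>1 (-x0) * b)"
        unfolding dt_def by (simp add: algebra_simps)
      then have "dt * a = 0" using e1 e2 by simp
      moreover have "dt * b = \<Phi> (-x0) * (\<Phi>1 (-x0) * a + \<Xi>1 (-x0) * b) - \<Phi>1 (-x0) * (\<Phi> (-x0) * a + \<Xi> (-x0) * b)"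
        unfolding dt_def by (simp add: algebra_simps)
      then have "dt * b = 0" using e1 e2 by simp
      ultimately show "a = 0 \<and> b = 0" using det unfolding dt_def by simp
    qed
    have span: "\<forall>Z. eigfun k x0 \<mu> Z \<longrightarrow> (\<exists>a b. \<forall>x\<in>{-x0..x0}. Z x = a * \<Psi> x + b * \<Theta> x)"
    proof (intro allI impI)
      fix Z assume efZ: "eigfun k x0 \<mu> Z"
      obtain Z1 Y Y1 where SZ: "sol k x0 \<mu> Z Z1 Y Y1" and bZ: "Z (-x0) = 0" "Z1 (-x0) = 0"
        using eigfun_sol[OF efZ] by metis
      define a where "a = (Y (-x0) * \<Xi>1 (-x0) - Y1 (-x0) * \<Xi> (-x0)) / dt"
      define b where "b = (\<Phi> (-x0) * Y1 (-x0) - \<Phi>1 (-x0) * Y (-x0)) / dt"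
      have dnz: "dt \<noteq> 0" using det unfolding dt_def by simp
      have d1: "Y (-x0) = a * \<Phi> (-x0) + b * \<Xi> (-x0)"
        unfolding a_def b_def dt_def by (rule cramer(1)[OF det])
      have d2: "Y1 (-x0) = a * \<Phi>1 (-x0) + b * \<Xi>1 (-x0)"
        unfolding a_def b_def dt_def by (rule cramer(2)[OF det])
      show "\<exists>a b. \<forall>x\<in>{-x0..x0}. Z x = a * \<Psi> x + b * \<Theta> x"
        using red[OF SZ ST bZ bT d1 d2] unfolding I_def by blast
    qed
    have "double_eigenvalue k x0 \<mu>"
      unfolding double_eigenvalue_def using ef efT ind span by blast
    then show ?thesis by simp
  next
    case False
    have span: "\<forall>Z. eigfun k x0 \<mu> Z \<longrightarrow> (\<exists>c. \<forall>x\<in>{-x0..x0}. Z x = c * \<Psi> x)"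
    proof (intro allI impI)
      fix Z assume efZ: "eigfun k x0 \<mu> Z"
      obtain Z1 Y Y1 where SZ: "sol k x0 \<mu> Z Z1 Y Y1" and bZ: "Z (-x0) = 0" "Z1 (-x0) = 0"
        using eigfun_sol[OF efZ] by metis
      have det0: "\<Phi> (-x0) * Y1 (-x0) - \<Phi>1 (-x0) * Y (-x0) = 0"
        using False efZ SZ bZ by blast
      obtain c where c1: "Y (-x0) = c * \<Phi> (-x0)" and c2: "Y1 (-x0) = c * \<Phi>1 (-x0)"
      proof (cases "\<Phi> (-x0) = 0")
        case True
        then have "\<Phi>1 (-x0) \<noteq> 0" using vnz by simp
        then show ?thesis
          using that[of "Y1 (-x0) / \<Phi>1 (-x0)"] det0 True by (simp add: field_simps)
      next
        case False
        then show ?thesis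
          using that[of "Y (-x0) / \<Phi> (-x0)"] det0 by (simp add: field_simps)
      qed
      have "Z x = c * \<Psi> x + 0 * \<Psi> x" if "x \<in> I" for x
        by (rule red[OF SZ S bZ bc _ _ that]) (use c1 c2 in simp_all)
      then show "\<exists>c. \<forall>x\<in>{-x0..x0}. Z x = c * \<Psi> x" unfolding I_def by auto
    qed
    have "simple_eigenvalue k x0 \<mu>"
      unfolding simple_eigenvalue_def using ef x1 span unfolding I_def by blast
    then show ?thesis by simp
  qed
qed

lemma ortho:
  assumes Sa: "sol k x0 \<mu>a \<Psi>a \<Psi>a1 \<Phi>a \<Phi>a1" and ba: "\<Psi>a (-x0) = 0" "\<Psi>a x0 = 0" "\<Psi>a1 (-x0) = 0" "\<Psi>a1 x0 = 0"
    and Sb: "sol k x0 \<mu>b \<Psi>b \<Psi>b1 \<Phi>b \<Phi>b1" and bb: "\<Psi>b (-x0) = 0" "\<Psi>b x0 = 0" "\<Psi>b1 (-x0) = 0" "\<Psi>b1 x0 = 0"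
    and ne: "cnj \<mu>b \<noteq> \<mu>a"
  shows "\<exists>G. (\<forall>x\<in>{-x0..x0}. (G has_vector_derivative \<Phi>a x * cnj (\<Phi>b x)) (at x within {-x0..x0}))
            \<and> G (-x0) = 0 \<and> G x0 = 0"
proof -
  define I where "I = {-x0..x0}"
  define \<kappa> where "\<kappa> x = (real_of_int k)\<^sup>2 / (1 - x\<^sup>2)" for x
  have a1: "\<And>x. x \<in> I \<Longrightarrow> (\<Psi>a has_vector_derivative \<Psi>a1 x) (at x within I)"
   and a2: "\<And>x. x \<in> I \<Longrightarrow> ((\<lambda>t. complex_of_real (1 - t\<^sup>2) * \<Psi>a1 t) has_vector_derivative
             (\<Phi>a x + complex_of_real (\<kappa> x) * \<Psi>a x)) (at x within I)"
   and a3: "\<And>x. x \<in> I \<Longrightarrow> (\<Phi>a has_vector_derivative \<Phi>a1 x) (at x within I)"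
   and a4: "\<And>x. x \<in> I \<Longrightarrow> ((\<lambda>t. complex_of_real (1 - t\<^sup>2) * \<Phi>a1 t) has_vector_derivative
             (\<mu>a * \<Phi>a x + complex_of_real (\<kappa> x) * \<Phi>a x)) (at x within I)"
    using Sa unfolding sol_def I_def \<kappa>_def by blast+
  have b1: "\<And>x. x \<in> I \<Longrightarrow> (\<Psi>b has_vector_derivative \<Psi>b1 x) (at x within I)"
   and b2: "\<And>x. x \<in> I \<Longrightarrow> ((\<lambda>t. complex_of_real (1 - t\<^sup>2) * \<Psi>b1 t) has_vector_derivative
             (\<Phi>b x + complex_of_real (\<kappa> x) * \<Psi>b x)) (at x within I)"
   and b3: "\<And>x. x \<in> I \<Longrightarrow> (\<Phi>b has_vector_derivative \<Phi>b1 x) (at x within I)"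
   and b4: "\<And>x. x \<in> I \<Longrightarrow> ((\<lambda>t. complex_of_real (1 - t\<^sup>2) * \<Phi>b1 t) has_vector_derivative
             (\<mu>b * \<Phi>b x + complex_of_real (\<kappa> x) * \<Phi>b x)) (at x within I)"
    using Sb unfolding sol_def I_def \<kappa>_def by blast+
  define W1 where "W1 t = complex_of_real (1 - t\<^sup>2) * \<Psi>a1 t * cnj (\<Psi>b t) - \<Psi>a t * cnj (complex_of_real (1 - t\<^sup>2) * \<Psi>b1 t)" for t
  define W2 where "W2 t = complex_of_real (1 - t\<^sup>2) * \<Phi>a1 t * cnj (\<Psi>b t) - \<Phi>a t * cnj (complex_of_real (1 - t\<^sup>2) * \<Psi>b1 t)" for t
  define W3 where "W3 t = complex_of_real (1 - t\<^sup>2) * \<Psi>a1 t * cnj (\<Phi>b t) - \<Psi>a t * cnj (complex_of_real (1 - t\<^sup>2) * \<Phi>b1 t)" for t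
  define dd where "dd = cnj \<mu>b - \<mu>a"
  have dd: "dd \<noteq> 0" using ne unfolding dd_def by simp
  define G where "G t = (cnj \<mu>b * (\<mu>a * W1 t - W2 t) - \<mu>a * W3 t) / dd" for t
  have dW1: "(W1 has_vector_derivative (\<Phi>a x * cnj (\<Psi>b x) - \<Psi>a x * cnj (\<Phi>b x))) (at x within I)" if "x \<in> I" for x
    unfolding W1_def[abs_def] by (rule green[OF a1[OF that] a2[OF that] b1[OF that] b2[OF that]])
  have dW2: "(W2 has_vector_derivative (\<mu>a * \<Phi>a x * cnj (\<Psi>b x) - \<Phi>a x * cnj (\<Phi>b x))) (at x within I)" if "x \<in> I" for x
    unfolding W2_def[abs_def] by (rule green[OF a3[OF that] a4[OF that] b1[OF that] b2[OF that]])
  have dW3: "(W3 has_vector_derivative (\<Phi>a x * cnj (\<Phi>b x) - \<Psi>a x * cnj (\<mu>b * \<Phi>b x))) (at x within I)" if "x \<in> I" for x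
    unfolding W3_def[abs_def] by (rule green[OF a1[OF that] a2[OF that] b3[OF that] b4[OF that]])
  have dG: "(G has_vector_derivative \<Phi>a x * cnj (\<Phi>b x)) (at x within I)" if "x \<in> I" for x
  proof -
    have "((\<lambda>t. (cnj \<mu>b * (\<mu>a * W1 t - W2 t) - \<mu>a * W3 t) / dd) has_vector_derivative
        (cnj \<mu>b * (\<mu>a * (\<Phi>a x * cnj (\<Psi>b x) - \<Psi>a x * cnj (\<Phi>b x)) - (\<mu>a * \<Phi>a x * cnj (\<Psi>b x) - \<Phi>a x * cnj (\<Phi>b x)))
          - \<mu>a * (\<Phi>a x * cnj (\<Phi>b x) - \<Psi>a x * cnj (\<mu>b * \<Phi>b x))) / dd) (at x within I)"
      by (intro has_vector_derivative_divide has_vector_derivative_diff has_vector_derivative_mult_right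
          dW1[OF that] dW2[OF that] dW3[OF that])
    moreover have "(cnj \<mu>b * (\<mu>a * (\<Phi>a x * cnj (\<Psi>b x) - \<Psi>a x * cnj (\<Phi>b x)) - (\<mu>a * \<Phi>a x * cnj (\<Psi>b x) - \<Phi>a x * cnj (\<Phi>b x)))
          - \<mu>a * (\<Phi>a x * cnj (\<Phi>b x) - \<Psi>a x * cnj (\<mu>b * \<Phi>b x))) = dd * (\<Phi>a x * cnj (\<Phi>b x))"
      unfolding dd_def by (simp add: algebra_simps)
    ultimately show ?thesis unfolding G_def[abs_def] using dd by simp
  qed
  have "G (-x0) = 0" "G x0 = 0" unfolding G_def W1_def W2_def W3_def using ba bb by simp_all
  then show ?thesis using dG unfolding I_def by blast
qed

definition CB :: "int \<Rightarrow> real \<Rightarrow> real \<Rightarrow> real" where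
  "CB k x0 Mu = 1 / (1 - x0\<^sup>2) + Mu + (real_of_int k)\<^sup>2 * (1 / (1 - x0\<^sup>2))"

lemma CB_bounds:
  assumes "0 < x0" "x0 < 1" "x \<in> {-x0..x0}" "cmod \<nu> \<le> Mu"
  shows "0 \<le> CB k x0 Mu"
    "cmod (complex_of_real (1 / (1 - x\<^sup>2))) \<le> CB k x0 Mu"
    "cmod (\<nu> + complex_of_real ((real_of_int k)\<^sup>2 / (1 - x\<^sup>2))) \<le> CB k x0 Mu"
  using Cb_bounds[OF assms(1-3), where k=k and \<mu>=\<nu>] assms(4) unfolding Cb_def CB_def by linarith+

lemma single_bound:
  assumes S: "sol k x0 \<nu> \<Psi> \<Psi>1 \<Phi> \<Phi>1" and x0: "0 < x0" "x0 < 1" and mu: "cmod \<nu> \<le> Mu"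
    and nrm: "(cmod (\<Phi> (-x0)))\<^sup>2 + (cmod (complex_of_real (1 - (-x0)\<^sup>2) * \<Phi>1 (-x0)))\<^sup>2 = 1"
    and x: "x \<in> {-x0..x0}"
  shows "cmod (\<Phi> x) \<le> sqrt (exp ((2 * CB k x0 Mu + 1) * (2 * x0)))"
proof -
  have ab: "-x0 \<le> x0" using x0 by simp
  have "(cmod (\<Phi> x))\<^sup>2 + (cmod (complex_of_real (1 - x\<^sup>2) * \<Phi>1 x))\<^sup>2
       \<le> ((cmod (\<Phi> (-x0)))\<^sup>2 + (cmod (complex_of_real (1 - (-x0)\<^sup>2) * \<Phi>1 (-x0)))\<^sup>2 + 0\<^sup>2)
          * exp ((2 * CB k x0 Mu + 1) * (x - (-x0)))"
    by (rule gronwall2[where F=\<Phi> and G="\<lambda>t. complex_of_real (1 - t\<^sup>2) * \<Phi>1 t",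
          OF ab CB_bounds(1)[OF x0 x mu] sys(1)[OF S x0] sys(2)[OF S x0]
          CB_bounds(2)[OF x0 _ mu] CB_bounds(3)[OF x0 _ mu] _ x]) auto
  also have "\<dots> = exp ((2 * CB k x0 Mu + 1) * (x + x0))" using nrm by simp
  also have "\<dots> \<le> exp ((2 * CB k x0 Mu + 1) * (2 * x0))"
    using x CB_bounds(1)[OF x0 x mu] by (intro exp_mono mult_left_mono) auto
  finally have "(cmod (\<Phi> x))\<^sup>2 \<le> exp ((2 * CB k x0 Mu + 1) * (2 * x0))"
    using zero_le_power2[of "cmod (complex_of_real (1 - x\<^sup>2) * \<Phi>1 x)"] by linarith
  then show ?thesis by (rule real_le_rsqrt)
qed

lemma diff_bound:
  assumes Sa: "sol k x0 \<nu>a \<Psi>a \<Psi>a1 \<Phi>a \<Phi>a1" and Sb: "sol k x0 \<nu>b \<Psi>b \<Psi>b1 \<Phi>b \<Phi>b1"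
    and x0: "0 < x0" "x0 < 1" and mu: "cmod \<nu>a \<le> Mu"
    and bnd: "\<And>x. x \<in> {-x0..x0} \<Longrightarrow> cmod (\<Phi>b x) \<le> B"
    and x: "x \<in> {-x0..x0}"
  shows "(cmod (\<Phi>a x - \<Phi>b x))\<^sup>2 + (cmod (complex_of_real (1 - x\<^sup>2) * \<Phi>a1 x - complex_of_real (1 - x\<^sup>2) * \<Phi>b1 x))\<^sup>2
     \<le> ((cmod (\<Phi>a (-x0) - \<Phi>b (-x0)))\<^sup>2
         + (cmod (complex_of_real (1 - (-x0)\<^sup>2) * \<Phi>a1 (-x0) - complex_of_real (1 - (-x0)\<^sup>2) * \<Phi>b1 (-x0)))\<^sup>2
         + (cmod (\<nu>a - \<nu>b) * B)\<^sup>2) * exp ((2 * CB k x0 Mu + 1) * (x - (-x0)))"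
proof -
  have ab: "-x0 \<le> x0" using x0 by simp
  have dF: "((\<lambda>t. \<Phi>a t - \<Phi>b t) has_vector_derivative
      (complex_of_real (1 / (1 - y\<^sup>2)) * (complex_of_real (1 - y\<^sup>2) * \<Phi>a1 y - complex_of_real (1 - y\<^sup>2) * \<Phi>b1 y)))
      (at y within {-x0..x0})" if "y \<in> {-x0..x0}" for y
    by (rule has_vector_derivative_eq_rhs[OF has_vector_derivative_diff[OF sys(1)[OF Sa x0 that] sys(1)[OF Sb x0 that]]])
       (simp add: algebra_simps)
  have dG: "((\<lambda>t. complex_of_real (1 - t\<^sup>2) * \<Phi>a1 t - complex_of_real (1 - t\<^sup>2) * \<Phi>b1 t) has_vector_derivative
      ((\<nu>a + complex_of_real ((real_of_int k)\<^sup>2 / (1 - y\<^sup>2))) * (\<Phi>a y - \<Phi>b y) + (\<nu>a - \<nu>b) * \<Phi>b y))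
      (at y within {-x0..x0})" if "y \<in> {-x0..x0}" for y
    by (rule has_vector_derivative_eq_rhs[OF has_vector_derivative_diff[OF sys(2)[OF Sa x0 that] sys(2)[OF Sb x0 that]]])
       (simp add: algebra_simps diff_divide_distrib)
  have br: "cmod ((\<nu>a - \<nu>b) * \<Phi>b y) \<le> cmod (\<nu>a - \<nu>b) * B" if "y \<in> {-x0..x0}" for y
    unfolding norm_mult by (rule mult_left_mono[OF bnd[OF that]]) simp
  show ?thesis
    by (rule gronwall2[where F="\<lambda>t. \<Phi>a t - \<Phi>b t" and G="\<lambda>t. complex_of_real (1 - t\<^sup>2) * \<Phi>a1 t - complex_of_real (1 - t\<^sup>2) * \<Phi>b1 t",
          OF ab CB_bounds(1)[OF x0 x mu] dF dG CB_bounds(2)[OF x0 _ mu] CB_bounds(3)[OF x0 _ mu] br x])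
qed

lemma normalized_sol:
  assumes x0: "0 < x0" "x0 < 1" and ev: "is_eigenvalue k x0 \<nu>"
  shows "\<exists>\<Psi> \<Psi>1 \<Phi> \<Phi>1. sol k x0 \<nu> \<Psi> \<Psi>1 \<Phi> \<Phi>1 \<and> \<Psi> (-x0) = 0 \<and> \<Psi> x0 = 0 \<and> \<Psi>1 (-x0) = 0 \<and> \<Psi>1 x0 = 0
     \<and> (cmod (\<Phi> (-x0)))\<^sup>2 + (cmod (complex_of_real (1 - (-x0)\<^sup>2) * \<Phi>1 (-x0)))\<^sup>2 = 1"
proof -
  obtain \<Psi> x1 where ef: "eigfun k x0 \<nu> \<Psi>" and x1: "x1 \<in> {-x0..x0}" "\<Psi> x1 \<noteq> 0"
    using ev unfolding is_eigenvalue_def by blast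
  obtain \<Psi>1 \<Phi> \<Phi>1 where S: "sol k x0 \<nu> \<Psi> \<Psi>1 \<Phi> \<Phi>1" and bc: "\<Psi> (-x0) = 0" "\<Psi> x0 = 0" "\<Psi>1 (-x0) = 0" "\<Psi>1 x0 = 0"
    using eigfun_sol[OF ef] by metis
  define s where "s = (cmod (\<Phi> (-x0)))\<^sup>2 + (cmod (complex_of_real (1 - (-x0)\<^sup>2) * \<Phi>1 (-x0)))\<^sup>2"
  have w: "1 - x0\<^sup>2 \<noteq> 0" using w_pos(3)[OF x0, of x0] x0 by simp
  have w2: "(complex_of_real x0)\<^sup>2 \<noteq> 1"
  proof
    assume "(complex_of_real x0)\<^sup>2 = 1"
    then have "complex_of_real (x0\<^sup>2) = 1" by simp
    then have "x0\<^sup>2 = 1" by (simp only: of_real_eq_1_iff)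
    then show False using w by simp
  qed
  have "s \<noteq> 0"
  proof
    assume "s = 0"
    then have "\<Phi> (-x0) = 0" "\<Phi>1 (-x0) = 0" unfolding s_def using w w2
      by (simp_all add: sum_power2_eq_zero_iff)
    then show False using uniq[OF S x0 _ _ bc(1,3) x1(1)] x1(2) by simp
  qed
  moreover have "0 \<le> s" unfolding s_def by simp
  ultimately have sp: "0 < s" by simp
  define c where "c = complex_of_real (1 / sqrt s)"
  have S2: "sol k x0 \<nu> (\<lambda>x. c * \<Psi> x + 0 * \<Psi> x) (\<lambda>x. c * \<Psi>1 x + 0 * \<Psi>1 x)
     (\<lambda>x. c * \<Phi> x + 0 * \<Phi> x) (\<lambda>x. c * \<Phi>1 x + 0 * \<Phi>1 x)"
    by (rule sol_lin[OF S S])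
  have "(cmod (c * \<Phi> (-x0) + 0 * \<Phi> (-x0)))\<^sup>2 + (cmod (complex_of_real (1 - (-x0)\<^sup>2) * (c * \<Phi>1 (-x0) + 0 * \<Phi>1 (-x0))))\<^sup>2
      = (cmod c)\<^sup>2 * s"
  proof -
    have e1: "c * \<Phi> (-x0) + 0 * \<Phi> (-x0) = c * \<Phi> (-x0)" by simp
    have e2: "complex_of_real (1 - (-x0)\<^sup>2) * (c * \<Phi>1 (-x0) + 0 * \<Phi>1 (-x0))
        = c * (complex_of_real (1 - (-x0)\<^sup>2) * \<Phi>1 (-x0))"
      by (simp only: mult_zero_left add_0_right mult.left_commute)
    show ?thesis unfolding e1 e2 s_def norm_mult power_mult_distrib by (simp only: distrib_left)
  qed
  also have "\<dots> = 1"
  proof -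
    have "cmod c = 1 / sqrt s" unfolding c_def using sp by (simp only: norm_of_real) simp
    then show ?thesis using sp by (simp add: power_divide)
  qed
  finally show ?thesis using S2 bc
    by (intro exI[of _ "\<lambda>x. c * \<Psi> x + 0 * \<Psi> x"] exI[of _ "\<lambda>x. c * \<Psi>1 x + 0 * \<Psi>1 x"]
        exI[of _ "\<lambda>x. c * \<Phi> x + 0 * \<Phi> x"] exI[of _ "\<lambda>x. c * \<Phi>1 x + 0 * \<Phi>1 x"] conjI) simp_all
qed

lemma re_lower:
  fixes a b g :: complex
  assumes "cmod (a - g) \<le> \<epsilon>" "cmod (b - g) \<le> \<epsilon>" "cmod b \<le> B" "cmod g \<le> B"
  shows "(cmod g)\<^sup>2 - 2 * B * \<epsilon> \<le> Re (a * cnj b)"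
proof -
  have e: "a * cnj b = g * cnj g + (a - g) * cnj b + g * cnj (b - g)" by (simp add: algebra_simps)
  have r1: "- (cmod (a - g) * cmod b) \<le> Re ((a - g) * cnj b)"
    using abs_Re_le_cmod[of "(a - g) * cnj b"] by (simp add: norm_mult)
  have r2: "- (cmod g * cmod (b - g)) \<le> Re (g * cnj (b - g))"
    using abs_Re_le_cmod[of "g * cnj (b - g)"] by (simp add: norm_mult del: complex_cnj_diff)
  have B0: "0 \<le> B" using assms(4) norm_ge_zero[of g] by linarith
  have e0: "0 \<le> \<epsilon>" using assms(1) norm_ge_zero[of "a - g"] by linarith
  have "cmod (a - g) * cmod b \<le> \<epsilon> * B"
    by (rule mult_mono) (simp_all add: assms B0 e0)
  moreover have "cmod g * cmod (b - g) \<le> B * \<epsilon>"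
    by (rule mult_mono) (simp_all add: assms B0 e0)
  moreover have "Re (g * cnj g) = (cmod g)\<^sup>2" by (rule Re_sq)
  moreover have "2 * B * \<epsilon> = \<epsilon> * B + B * \<epsilon>" by simp
  ultimately show ?thesis using r1 r2 unfolding e by (simp only: plus_complex.sel)
qed

lemma three_interval:
  fixes R R' :: "real \<Rightarrow> real"
  assumes ab: "a < b" "a \<le> \<alpha>" "\<alpha> < \<beta>" "\<beta> \<le> b"
    and d: "\<And>x. x \<in> {a..b} \<Longrightarrow> (R has_real_derivative R' x) (at x within {a..b})"
    and l1: "\<And>x. x \<in> {a..b} \<Longrightarrow> - \<eta> \<le> R' x"
    and l2: "\<And>x. x \<in> {\<alpha>..\<beta>} \<Longrightarrow> c - \<eta> \<le> R' x"
    and e: "R a = R b"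
  shows "c * (\<beta> - \<alpha>) \<le> \<eta> * (b - a)"
proof -
  have cont: "continuous_on {a..b} R" by (rule cont_from_deriv) (use d in auto)
  have D: "(R has_real_derivative R' x) (at x)" if "a < x" "x < b" for x
    using d[of x] that at_interior_deriv[of R "R' x" x a b] by auto
  have i1: "R \<alpha> - R a \<ge> (- \<eta>) * (\<alpha> - a)"
    by (rule incr_lemma[where f'=R']) (use ab D l1 in \<open>auto intro: continuous_on_subset[OF cont]\<close>)
  have i2: "R \<beta> - R \<alpha> \<ge> (c - \<eta>) * (\<beta> - \<alpha>)"
    by (rule incr_lemma[where f'=R']) (use ab D l2 in \<open>auto intro: continuous_on_subset[OF cont]\<close>)
  have i3: "R b - R \<beta> \<ge> (- \<eta>) * (b - \<beta>)"
    by (rule incr_lemma[where f'=R']) (use ab D l1 in \<open>auto intro: continuous_on_subset[OF cont]\<close>)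
  have "(- \<eta>) * (\<alpha> - a) + (c - \<eta>) * (\<beta> - \<alpha>) + (- \<eta>) * (b - \<beta>) = c * (\<beta> - \<alpha>) - \<eta> * (b - a)"
    by (simp add: algebra_simps)
  then show ?thesis using i1 i2 i3 e by linarith
qed

lemma eig_real:
  assumes x0: "0 < x0" "x0 < 1" and k: "k \<noteq> 0" and ev: "is_eigenvalue k x0 \<nu>"
  shows "Im \<nu> = 0 \<and> Re \<nu> < 0"
proof -
  obtain \<Psi> x1 where ef: "eigfun k x0 \<nu> \<Psi>" and x1: "x1 \<in> {-x0..x0}" "\<Psi> x1 \<noteq> 0"
    using ev unfolding is_eigenvalue_def by blast
  obtain \<Psi>1 \<Phi> \<Phi>1 where S: "sol k x0 \<nu> \<Psi> \<Psi>1 \<Phi> \<Phi>1" and bc: "\<Psi> (-x0) = 0" "\<Psi> x0 = 0" "\<Psi>1 (-x0) = 0" "\<Psi>1 x0 = 0"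
    using eigfun_sol[OF ef] by metis
  show ?thesis by (rule real_neg[OF S x0 k bc x1])
qed

lemma inj_seq:
  fixes \<mu> :: complex
  assumes lp: "\<mu> islimpt E"
  obtains g :: "nat \<Rightarrow> complex" where "\<And>n. g n \<in> E" "\<And>n. g n \<noteq> \<mu>" "\<And>n. dist (g n) \<mu> < 1 / (real n + 1)"
    "\<And>m n. m < n \<Longrightarrow> dist (g n) \<mu> < dist (g m) \<mu>"
proof -
  have appr: "\<exists>\<nu>\<in>E. \<nu> \<noteq> \<mu> \<and> dist \<nu> \<mu> < e" if "e > 0" for e
    using lp that unfolding islimpt_approachable by blast
  define nxt where "nxt e = (SOME \<nu>. \<nu> \<in> E \<and> \<nu> \<noteq> \<mu> \<and> dist \<nu> \<mu> < e)" for e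
  have nxt: "nxt e \<in> E \<and> nxt e \<noteq> \<mu> \<and> dist (nxt e) \<mu> < e" if "e > 0" for e
    unfolding nxt_def by (rule someI_ex) (use appr[OF that] in blast)
  define g where "g = rec_nat (nxt 1) (\<lambda>n prev. nxt (min (dist prev \<mu>) (1 / (real n + 2))))"
  have g0: "g 0 = nxt 1" unfolding g_def by simp
  have gS: "g (Suc n) = nxt (min (dist (g n) \<mu>) (1 / (real n + 2)))" for n unfolding g_def by simp
  have gp: "g n \<in> E \<and> g n \<noteq> \<mu> \<and> dist (g n) \<mu> < 1 / (real n + 1)" for n
  proof (induction n)
    case 0
    show ?case using nxt[of 1] g0 by simp
  next
    case (Suc n)
    have pos: "0 < min (dist (g n) \<mu>) (1 / (real n + 2))" using Suc by simp
    have "dist (g (Suc n)) \<mu> < min (dist (g n) \<mu>) (1 / (real n + 2))" using nxt[OF pos] gS[of n] by simp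
    then have "dist (g (Suc n)) \<mu> < 1 / (real (Suc n) + 1)" by (simp add: add.commute)
    then show ?case using nxt[OF pos] gS[of n] by simp
  qed
  have gdec: "dist (g (Suc n)) \<mu> < dist (g n) \<mu>" for n
  proof -
    have pos: "0 < min (dist (g n) \<mu>) (1 / (real n + 2))" using gp[of n] by simp
    show ?thesis using nxt[OF pos] gS[of n] by simp
  qed
  have gdec2: "dist (g (Suc (m + j))) \<mu> < dist (g m) \<mu>" for m j
  proof (induction j)
    case 0 show ?case using gdec[of m] by simp
  next
    case (Suc j) then show ?case using gdec[of "Suc (m + j)"] by simp
  qed
  have "dist (g n) \<mu> < dist (g m) \<mu>" if "m < n" for m n
    using gdec2[of m "n - m - 1"] that by (simp add: Suc_diff_Suc)
  then show ?thesis using that gp by blast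
qed

lemma normsq_pair: "(norm (a, b))\<^sup>2 = (norm a)\<^sup>2 + (norm b)\<^sup>2"
  by (simp add: norm_Pair)

lemma isolated:
  assumes x0: "0 < x0" "x0 < 1" and k: "k \<noteq> 0"
  shows "\<not> \<mu> islimpt {\<nu>. is_eigenvalue k x0 \<nu>}"
proof
  assume lp: "\<mu> islimpt {\<nu>. is_eigenvalue k x0 \<nu>}"
  define I where "I = {-x0..x0}"
  have ab: "-x0 < x0" using x0 by simp
  obtain g where gE0: "\<And>n. g n \<in> {\<nu>. is_eigenvalue k x0 \<nu>}" and gne: "\<And>n. g n \<noteq> \<mu>"
    and gd: "\<And>n. dist (g n) \<mu> < 1 / (real n + 1)"
    and gdec: "\<And>m n. m < n \<Longrightarrow> dist (g n) \<mu> < dist (g m) \<mu>"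
    using inj_seq[OF lp] by blast
  have gE: "is_eigenvalue k x0 (g n)" for n using gE0[of n] by simp
  have ginj: "g m \<noteq> g n" if "m < n" for m n using gdec[OF that] by auto
  have glim: "g \<longlonglongrightarrow> \<mu>"
  proof (rule LIMSEQ_I)
    fix r :: real assume r: "0 < r"
    obtain n0 where n0: "inverse (real (Suc n0)) < r" using reals_Archimedean[OF r] by blast
    show "\<exists>no. \<forall>n\<ge>no. norm (g n - \<mu>) < r"
    proof (intro exI allI impI)
      fix n assume "n0 \<le> n"
      then have "1 / (real n + 1) \<le> inverse (real (Suc n0))"
        unfolding inverse_eq_divide by (intro divide_left_mono) auto
      then show "norm (g n - \<mu>) < r" using gd[of n] n0 by (simp add: dist_norm)
    qed
  qed
  define Mu where "Mu = cmod \<mu> + 1"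
  have gb: "cmod (g n) \<le> Mu" for n
  proof -
    have h: "1 / (real n + 1) \<le> 1" by simp
    have "cmod (g n - \<mu>) < 1 / (real n + 1)" using gd[of n] by (simp add: dist_norm)
    then have "cmod (g n - \<mu>) < 1" using h by linarith
    moreover have "cmod (g n) \<le> cmod \<mu> + cmod (g n - \<mu>)" using norm_triangle_ineq[of \<mu> "g n - \<mu>"] by simp
    ultimately show ?thesis unfolding Mu_def by simp
  qed
  have greal: "Im (g n) = 0" for n using eig_real[OF x0 k gE] by simp
  define Q where "Q n q = (sol k x0 (g n) (fst q) (fst (snd q)) (fst (snd (snd q))) (snd (snd (snd q)))
     \<and> fst q (-x0) = 0 \<and> fst q x0 = 0 \<and> fst (snd q) (-x0) = 0 \<and> fst (snd q) x0 = 0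
     \<and> (cmod (fst (snd (snd q)) (-x0)))\<^sup>2 + (cmod (complex_of_real (1 - (-x0)\<^sup>2) * snd (snd (snd q)) (-x0)))\<^sup>2 = 1)"
    for n and q :: "(real \<Rightarrow> complex) \<times> (real \<Rightarrow> complex) \<times> (real \<Rightarrow> complex) \<times> (real \<Rightarrow> complex)"
  have "\<forall>n. \<exists>q. Q n q"
  proof
    fix n
    obtain A A1 B B1 where h: "sol k x0 (g n) A A1 B B1 \<and> A (-x0) = 0 \<and> A x0 = 0 \<and> A1 (-x0) = 0 \<and> A1 x0 = 0
     \<and> (cmod (B (-x0)))\<^sup>2 + (cmod (complex_of_real (1 - (-x0)\<^sup>2) * B1 (-x0)))\<^sup>2 = 1"
      using normalized_sol[OF x0 gE] by blast
    show "\<exists>q. Q n q" unfolding Q_def by (rule exI[of _ "(A, A1, B, B1)"]) (use h in simp)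
  qed
  then obtain qf where qf: "\<And>n. Q n (qf n)" using choice by blast
  define PS where "PS n = fst (qf n)" for n
  define PS1 where "PS1 n = fst (snd (qf n))" for n
  define PH where "PH n = fst (snd (snd (qf n)))" for n
  define PH1 where "PH1 n = snd (snd (snd (qf n)))" for n
  have SS: "\<And>n. sol k x0 (g n) (PS n) (PS1 n) (PH n) (PH1 n)"
    and SB: "\<And>n. PS n (-x0) = 0 \<and> PS n x0 = 0 \<and> PS1 n (-x0) = 0 \<and> PS1 n x0 = 0"
    and SN: "\<And>n. (cmod (PH n (-x0)))\<^sup>2 + (cmod (complex_of_real (1 - (-x0)\<^sup>2) * PH1 n (-x0)))\<^sup>2 = 1"
    using qf unfolding Q_def PS_def PS1_def PH_def PH1_def by blast+
  define dat where "dat n = (PH n (-x0), complex_of_real (1 - (-x0)\<^sup>2) * PH1 n (-x0))" for n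
  have nd: "norm (dat n) = 1" for n unfolding dat_def norm_Pair using SN[of n] by simp
  have "bounded (range dat)" unfolding bounded_iff using nd by auto
  then obtain l r where r: "strict_mono r" and dl: "(dat \<circ> r) \<longlonglongrightarrow> l"
    using bounded_imp_convergent_subsequence by blast
  have nl: "norm l = 1"
  proof -
    have "(\<lambda>n. norm ((dat \<circ> r) n)) \<longlonglongrightarrow> norm l" by (rule tendsto_norm[OF dl])
    moreover have "(\<lambda>n. norm ((dat \<circ> r) n)) = (\<lambda>n. 1)" using nd by auto
    ultimately show ?thesis using LIMSEQ_unique tendsto_const by metis
  qed
  define \<nu> where "\<nu> n = g (r n)" for n
  define F where "F n = PH (r n)" for n
  define P where "P n t = complex_of_real (1 - t\<^sup>2) * PH1 (r n) t" for n t
  define K where "K = 2 * CB k x0 Mu + 1"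
  define Ex where "Ex = exp (K * (2 * x0))"
  define B where "B = sqrt Ex"
  have Mu0: "0 \<le> Mu" unfolding Mu_def by simp
  have K0: "0 \<le> K" unfolding K_def using CB_bounds(1)[OF x0 _ gb[of 0], of x0] x0 by simp
  have Ex1: "1 \<le> Ex" unfolding Ex_def using K0 x0 by simp
  have B1: "1 \<le> B" unfolding B_def using Ex1 by simp
  have Fb: "cmod (F n x) \<le> B" if "x \<in> I" for n x
    unfolding F_def B_def Ex_def K_def
    by (rule single_bound[OF SS x0 gb SN that[unfolded I_def]])
  have Fd: "(cmod (F n x - F m x))\<^sup>2 + (cmod (P n x - P m x))\<^sup>2
      \<le> ((norm (dat (r n) - dat (r m)))\<^sup>2 + (cmod (\<nu> n - \<nu> m) * B)\<^sup>2) * Ex" if x: "x \<in> I" for n m x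
  proof -
    have "(cmod (F n x - F m x))\<^sup>2 + (cmod (P n x - P m x))\<^sup>2
     \<le> ((cmod (PH (r n) (-x0) - PH (r m) (-x0)))\<^sup>2
         + (cmod (complex_of_real (1 - (-x0)\<^sup>2) * PH1 (r n) (-x0) - complex_of_real (1 - (-x0)\<^sup>2) * PH1 (r m) (-x0)))\<^sup>2
         + (cmod (\<nu> n - \<nu> m) * B)\<^sup>2) * exp ((2 * CB k x0 Mu + 1) * (x - (-x0)))"
      unfolding F_def P_def \<nu>_def
      by (rule diff_bound[OF SS SS x0 gb _ x[unfolded I_def]]) (use Fb in \<open>simp add: F_def I_def\<close>)
    also have "\<dots> = ((norm (dat (r n) - dat (r m)))\<^sup>2 + (cmod (\<nu> n - \<nu> m) * B)\<^sup>2) * exp (K * (x + x0))"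
      unfolding dat_def K_def by (simp add: normsq_pair)
    also have "\<dots> \<le> ((norm (dat (r n) - dat (r m)))\<^sup>2 + (cmod (\<nu> n - \<nu> m) * B)\<^sup>2) * Ex"
      unfolding Ex_def using x K0 unfolding I_def by (intro mult_left_mono) (auto intro!: mult_left_mono)
    finally show ?thesis .
  qed
  have Cd: "Cauchy (dat \<circ> r)" by (rule LIMSEQ_imp_Cauchy[OF dl])
  have \<nu>lim: "\<nu> \<longlonglongrightarrow> \<mu>" using LIMSEQ_subseq_LIMSEQ[OF glim r] unfolding \<nu>_def o_def by simp
  have C\<nu>: "Cauchy \<nu>" by (rule LIMSEQ_imp_Cauchy[OF \<nu>lim])
  have unifC: "\<exists>N. \<forall>n\<ge>N. \<forall>m\<ge>N. \<forall>x\<in>I. cmod (F n x - F m x) \<le> \<epsilon> \<and> cmod (P n x - P m x) \<le> \<epsilon>"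
    if e: "0 < \<epsilon>" for \<epsilon>
  proof -
    define M where "M = (1 + B\<^sup>2) * Ex"
    have M0: "0 < M" unfolding M_def using Ex1 by (intro mult_pos_pos) (simp_all add: add_pos_nonneg)
    define \<delta> where "\<delta> = \<epsilon> / sqrt M"
    have d0: "0 < \<delta>" unfolding \<delta>_def using e M0 by simp
    have dM: "\<delta>\<^sup>2 * M = \<epsilon>\<^sup>2"
    proof -
      have "(sqrt M)\<^sup>2 = M" using M0 by simp
      then show ?thesis unfolding \<delta>_def power_divide using M0 by simp
    qed
    obtain N1 where N1: "\<forall>m\<ge>N1. \<forall>n\<ge>N1. norm ((dat \<circ> r) m - (dat \<circ> r) n) < \<delta>" using CauchyD[OF Cd d0] by blast
    obtain N2 where N2: "\<forall>m\<ge>N2. \<forall>n\<ge>N2. norm (\<nu> m - \<nu> n) < \<delta>" using CauchyD[OF C\<nu> d0] by blast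
    show ?thesis
    proof (intro exI[of _ "max N1 N2"] allI impI ballI)
      fix n m x assume n: "max N1 N2 \<le> n" and m: "max N1 N2 \<le> m" and x: "x \<in> I"
      have a1: "norm (dat (r n) - dat (r m)) < \<delta>" using N1 n m by auto
      have a2: "cmod (\<nu> n - \<nu> m) < \<delta>" using N2 n m by auto
      have "(norm (dat (r n) - dat (r m)))\<^sup>2 \<le> \<delta>\<^sup>2" using a1 by (intro power_mono) simp_all
      moreover have "cmod (\<nu> n - \<nu> m) * B \<le> \<delta> * B" using a2 B1 by (intro mult_right_mono) simp_all
      then have "(cmod (\<nu> n - \<nu> m) * B)\<^sup>2 \<le> (\<delta> * B)\<^sup>2" using B1 by (intro power_mono) simp_all
      ultimately have "((norm (dat (r n) - dat (r m)))\<^sup>2 + (cmod (\<nu> n - \<nu> m) * B)\<^sup>2) * Ex \<le> (\<delta>\<^sup>2 + (\<delta> * B)\<^sup>2) * Ex"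
        using Ex1 by (intro mult_right_mono) auto
      also have "\<dots> = \<delta>\<^sup>2 * M" unfolding M_def by (simp add: power_mult_distrib algebra_simps)
      also have "\<dots> = \<epsilon>\<^sup>2" by (rule dM)
      finally have s: "(cmod (F n x - F m x))\<^sup>2 + (cmod (P n x - P m x))\<^sup>2 \<le> \<epsilon>\<^sup>2" using Fd[OF x, of n m] by linarith
      have "(cmod (F n x - F m x))\<^sup>2 \<le> \<epsilon>\<^sup>2" using s zero_le_power2[of "cmod (P n x - P m x)"] by linarith
      then have "cmod (F n x - F m x) \<le> \<epsilon>" by (rule power2_le_imp_le) (use e in simp)
      moreover have "(cmod (P n x - P m x))\<^sup>2 \<le> \<epsilon>\<^sup>2" using s zero_le_power2[of "cmod (F n x - F m x)"] by linarith
      then have "cmod (P n x - P m x) \<le> \<epsilon>" by (rule power2_le_imp_le) (use e in simp)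
      ultimately show "cmod (F n x - F m x) \<le> \<epsilon> \<and> cmod (P n x - P m x) \<le> \<epsilon>" by simp
    qed
  qed
  have SB1: "PS n (-x0) = 0" "PS n x0 = 0" "PS1 n (-x0) = 0" "PS1 n x0 = 0" for n using SB[of n] by auto
  have FC: "Cauchy (\<lambda>n. F n x) \<and> Cauchy (\<lambda>n. P n x)" if x: "x \<in> I" for x
  proof -
    have A: "\<exists>M. \<forall>m\<ge>M. \<forall>n\<ge>M. norm (F m x - F n x) < e \<and> norm (P m x - P n x) < e" if e: "0 < e" for e
    proof -
      obtain N where N: "\<forall>n\<ge>N. \<forall>m\<ge>N. \<forall>x\<in>I. cmod (F n x - F m x) \<le> e/2 \<and> cmod (P n x - P m x) \<le> e/2"
        using unifC[of "e/2"] e by auto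
      have "norm (F m x - F n x) < e \<and> norm (P m x - P n x) < e" if "N \<le> m" "N \<le> n" for m n
        using N that x e by fastforce
      then show ?thesis by blast
    qed
    have "Cauchy (\<lambda>n. F n x)" by (rule CauchyI) (use A in blast)
    moreover have "Cauchy (\<lambda>n. P n x)" by (rule CauchyI) (use A in blast)
    ultimately show ?thesis by simp
  qed
  define gl where "gl x = lim (\<lambda>n. F n x)" for x
  define pl where "pl x = lim (\<lambda>n. P n x)" for x
  have Fconv: "(\<lambda>n. F n x) \<longlonglongrightarrow> gl x" if "x \<in> I" for x
    using FC[OF that] unfolding gl_def by (simp add: Cauchy_convergent_iff convergent_LIMSEQ_iff)
  have Pconv: "(\<lambda>n. P n x) \<longlonglongrightarrow> pl x" if "x \<in> I" for x
    using FC[OF that] unfolding pl_def by (simp add: Cauchy_convergent_iff convergent_LIMSEQ_iff)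
  have unifL: "\<exists>N. \<forall>n\<ge>N. \<forall>x\<in>I. cmod (F n x - gl x) \<le> \<epsilon> \<and> cmod (P n x - pl x) \<le> \<epsilon>" if e: "0 < \<epsilon>" for \<epsilon>
  proof -
    obtain N where N: "\<forall>n\<ge>N. \<forall>m\<ge>N. \<forall>x\<in>I. cmod (F n x - F m x) \<le> \<epsilon> \<and> cmod (P n x - P m x) \<le> \<epsilon>"
      using unifC[OF e] by blast
    have "cmod (F n x - gl x) \<le> \<epsilon> \<and> cmod (P n x - pl x) \<le> \<epsilon>" if n: "N \<le> n" and x: "x \<in> I" for n x
    proof
      have "(\<lambda>m. cmod (F n x - F m x)) \<longlonglongrightarrow> cmod (F n x - gl x)"
        by (intro tendsto_intros Fconv[OF x])
      then show "cmod (F n x - gl x) \<le> \<epsilon>" by (rule Lim_bounded[where M=N]) (use N n x in auto)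
      have "(\<lambda>m. cmod (P n x - P m x)) \<longlonglongrightarrow> cmod (P n x - pl x)"
        by (intro tendsto_intros Pconv[OF x])
      then show "cmod (P n x - pl x) \<le> \<epsilon>" by (rule Lim_bounded[where M=N]) (use N n x in auto)
    qed
    then show ?thesis by blast
  qed
  have glb: "cmod (gl x) \<le> B" if x: "x \<in> I" for x
    by (rule Lim_bounded[OF tendsto_norm[OF Fconv[OF x]], where M=0]) (use Fb x in auto)
  define p where "p x = complex_of_real (1 / (1 - x\<^sup>2))" for x
  define C0 where "C0 = 1 / (1 - x0\<^sup>2)"
  have C0p: "0 < C0" unfolding C0_def using w_pos(3)[OF x0, of x0] x0 by simp
  have pb: "cmod (p x) \<le> C0" if "x \<in> I" for x
    unfolding p_def C0_def using inv_w_bound[OF x0 that[unfolded I_def]]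
    by (simp only: norm_of_real abs_of_pos)
  have pnz: "p x \<noteq> 0" if "x \<in> I" for x
    unfolding p_def using inv_w_bound(2)[OF x0 that[unfolded I_def]] by (simp only: of_real_eq_0_iff)
  have Fder: "(F n has_vector_derivative p x * P n x) (at x within I)" if "x \<in> I" for n x
    unfolding F_def P_def p_def I_def using sys(1)[OF SS[of "r n"] x0 that[unfolded I_def]] by simp
  have "\<exists>gg. \<forall>x\<in>I. (\<lambda>n. F n x) \<longlonglongrightarrow> gg x \<and> (gg has_derivative (\<lambda>h. h *\<^sub>R (p x * pl x))) (at x within I)"
  proof (rule has_derivative_sequence[where f'="\<lambda>n x h. h *\<^sub>R (p x * P n x)"])
    show "convex I" unfolding I_def by simp
    show "\<And>n x. x \<in> I \<Longrightarrow> (F n has_derivative (\<lambda>h. h *\<^sub>R (p x * P n x))) (at x within I)"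
      using Fder unfolding has_vector_derivative_def by blast
    show "-x0 \<in> I" unfolding I_def using x0 by simp
    show "(\<lambda>n. F n (-x0)) \<longlonglongrightarrow> gl (-x0)" by (rule Fconv) (use x0 in \<open>simp add: I_def\<close>)
  next
    fix e :: real assume e: "0 < e"
    obtain N where N: "\<forall>n\<ge>N. \<forall>x\<in>I. cmod (F n x - gl x) \<le> e / C0 \<and> cmod (P n x - pl x) \<le> e / C0"
      using unifL[of "e / C0"] e C0p by auto
    show "\<forall>\<^sub>F n in sequentially. \<forall>x\<in>I. \<forall>h. norm (h *\<^sub>R (p x * P n x) - h *\<^sub>R (p x * pl x)) \<le> e * norm h"
      unfolding eventually_sequentially
    proof (intro exI[of _ N] allI impI ballI)
      fix n x h assume n: "N \<le> n" and x: "x \<in> I"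
      have "h *\<^sub>R (p x * P n x) - h *\<^sub>R (p x * pl x) = h *\<^sub>R (p x * (P n x - pl x))"
        by (simp add: algebra_simps)
      then have "norm (h *\<^sub>R (p x * P n x) - h *\<^sub>R (p x * pl x)) = \<bar>h\<bar> * (cmod (p x) * cmod (P n x - pl x))"
        by (simp add: norm_mult)
      also have "\<dots> \<le> \<bar>h\<bar> * (C0 * (e / C0))"
        using pb[OF x] N n x C0p by (intro mult_left_mono mult_mono) auto
      also have "\<dots> = e * norm h" using C0p by simp
      finally show "norm (h *\<^sub>R (p x * P n x) - h *\<^sub>R (p x * pl x)) \<le> e * norm h" .
    qed
  qed
  then obtain gg where gg: "\<And>x. x \<in> I \<Longrightarrow> (\<lambda>n. F n x) \<longlonglongrightarrow> gg x"
    "\<And>x. x \<in> I \<Longrightarrow> (gg has_derivative (\<lambda>h. h *\<^sub>R (p x * pl x))) (at x within I)" by blast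
  have ggl: "gg x = gl x" if "x \<in> I" for x using LIMSEQ_unique[OF gg(1)[OF that] Fconv[OF that]] .
  have gld: "(gl has_vector_derivative p x * pl x) (at x within I)" if x: "x \<in> I" for x
    by (rule has_vector_derivative_transform[OF x _ gg(2)[OF x, folded has_vector_derivative_def]])
       (use ggl in simp)
  have mI: "-x0 \<in> I" unfolding I_def using x0 by simp
  have fl: "gl (-x0) = fst l"
  proof -
    have "(\<lambda>n. fst ((dat \<circ> r) n)) \<longlonglongrightarrow> fst l" by (rule tendsto_fst[OF dl])
    moreover have "(\<lambda>n. fst ((dat \<circ> r) n)) = (\<lambda>n. F n (-x0))" unfolding dat_def F_def by auto
    ultimately show ?thesis using LIMSEQ_unique Fconv[OF mI] by metis
  qed
  have sl: "pl (-x0) = snd l"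
  proof -
    have "(\<lambda>n. snd ((dat \<circ> r) n)) \<longlonglongrightarrow> snd l" by (rule tendsto_snd[OF dl])
    moreover have "(\<lambda>n. snd ((dat \<circ> r) n)) = (\<lambda>n. P n (-x0))" unfolding dat_def P_def by auto
    ultimately show ?thesis using LIMSEQ_unique Pconv[OF mI] by metis
  qed
  have glz: "gl x = 0" if xI: "x \<in> I" for x
  proof (rule ccontr)
    assume "gl x \<noteq> 0"
    define x1 where "x1 = x"
    have x1: "x1 \<in> I" "gl x1 \<noteq> 0" using xI \<open>gl x \<noteq> 0\<close> unfolding x1_def by auto
    define c0 where "c0 = cmod (gl x1)"
    have c0: "0 < c0" unfolding c0_def using x1 by simp
    have contgl: "continuous_on I gl" by (rule continuous_on_vector_derivative) (use gld in auto)
    obtain \<delta> where d0: "0 < \<delta>" and dl1: "\<And>x'. x' \<in> I \<Longrightarrow> dist x' x1 < \<delta> \<Longrightarrow> dist (gl x') (gl x1) < c0 / 2"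
      using contgl[unfolded continuous_on_iff] x1(1) c0 by (meson half_gt_zero)
    define \<alpha> where "\<alpha> = max (-x0) (x1 - \<delta>/2)"
    define \<beta> where "\<beta> = min x0 (x1 + \<delta>/2)"
    have ab1: "-x0 \<le> \<alpha>" "\<alpha> < \<beta>" "\<beta> \<le> x0"
      using x1(1) d0 ab unfolding \<alpha>_def \<beta>_def I_def by auto
    define c where "c = (c0 / 2)\<^sup>2"
    have cpos: "0 < c" unfolding c_def using c0 by simp
    have big: "c \<le> (cmod (gl y))\<^sup>2" if y: "y \<in> {\<alpha>..\<beta>}" for y
    proof -
      have yI: "y \<in> I" using y ab1 unfolding I_def by auto
      have "dist y x1 < \<delta>" using y d0 unfolding \<alpha>_def \<beta>_def dist_real_def by auto
      then have "cmod (gl y - gl x1) < c0 / 2" using dl1[OF yI] by (simp add: dist_norm)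
      moreover have "c0 \<le> cmod (gl y) + cmod (gl y - gl x1)"
        unfolding c0_def using norm_triangle_ineq[of "gl y" "gl x1 - gl y"] norm_minus_commute[of "gl y" "gl x1"] by simp
      ultimately have "c0 / 2 \<le> cmod (gl y)" by linarith
      then show ?thesis unfolding c_def using c0 by (intro power_mono) auto
    qed
    define \<epsilon> where "\<epsilon> = c * (\<beta> - \<alpha>) / (8 * B * x0)"
    have epos: "0 < \<epsilon>" unfolding \<epsilon>_def using cpos ab1 B1 x0 by (intro divide_pos_pos mult_pos_pos) auto
    obtain N where N: "\<forall>n\<ge>N. \<forall>x\<in>I. cmod (F n x - gl x) \<le> \<epsilon> \<and> cmod (P n x - pl x) \<le> \<epsilon>"
      using unifL[OF epos] by blast
    have rlt: "r N < r (Suc N)" using r by (simp add: strict_monoD)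
    have nne0: "\<nu> (Suc N) \<noteq> \<nu> N" unfolding \<nu>_def using ginj[OF rlt] by auto
    have "cnj (\<nu> (Suc N)) = \<nu> (Suc N)" using greal[of "r (Suc N)"] unfolding \<nu>_def by (simp add: complex_eq_iff)
    then have nne: "cnj (\<nu> (Suc N)) \<noteq> \<nu> N" using nne0 by simp
    obtain G where G: "\<forall>x\<in>{-x0..x0}. (G has_vector_derivative F N x * cnj (F (Suc N) x)) (at x within {-x0..x0})"
      "G (-x0) = 0" "G x0 = 0"
      using ortho[OF SS[of "r N"] SB1[of "r N"] SS[of "r (Suc N)"] SB1[of "r (Suc N)"] nne[unfolded \<nu>_def]]
      unfolding F_def by blast
    have lowb: "(cmod (gl y))\<^sup>2 - 2 * B * \<epsilon> \<le> Re (F N y * cnj (F (Suc N) y))" if y: "y \<in> I" for y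
      by (rule re_lower) (use N y Fb glb in auto)
    have "c * (\<beta> - \<alpha>) \<le> (2 * B * \<epsilon>) * (x0 - (-x0))"
    proof (rule three_interval[OF ab ab1, where R="\<lambda>t. Re (G t)" and R'="\<lambda>y. Re (F N y * cnj (F (Suc N) y))"])
      show "((\<lambda>t. Re (G t)) has_real_derivative Re (F N y * cnj (F (Suc N) y))) (at y within {-x0..x0})"
        if "y \<in> {-x0..x0}" for y using has_field_derivative_Re[of G] G(1) that by blast
      show "- (2 * B * \<epsilon>) \<le> Re (F N y * cnj (F (Suc N) y))" if "y \<in> {-x0..x0}" for y
        using lowb[of y] that zero_le_power2[of "cmod (gl y)"] unfolding I_def by linarith
      show "c - 2 * B * \<epsilon> \<le> Re (F N y * cnj (F (Suc N) y))" if "y \<in> {\<alpha>..\<beta>}" for y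
        using lowb[of y] big[OF that] that ab1 unfolding I_def by auto
      show "Re (G (-x0)) = Re (G x0)" using G by simp
    qed
    also have "\<dots> = c * (\<beta> - \<alpha>) / 2" unfolding \<epsilon>_def using B1 x0 by (simp add: field_simps)
    finally show False using cpos ab1 by (simp add: field_simps)
  qed
  have "p (-x0) * pl (-x0) = 0"
    by (rule zero_deriv[OF ab mI[unfolded I_def] glz[unfolded I_def] gld[OF mI, unfolded I_def]])
  then have "pl (-x0) = 0" using pnz[OF mI] by simp
  then have "l = 0" using fl sl glz[OF mI] by (simp add: prod_eq_iff)
  then show False using nl by simp
qed

theorem proposition3:
  fixes k :: int and x0 :: real
  assumes "k \<noteq> 0" and "0 < x0" and "x0 < 1"
  shows "\<forall>\<mu>. is_eigenvalue k x0 \<mu> \<longrightarrow>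
           \<not> (\<mu> islimpt {\<nu>. is_eigenvalue k x0 \<nu>}) \<and>
           \<mu> \<in> \<real> \<and> Re \<mu> < 0 \<and>
           (simple_eigenvalue k x0 \<mu> \<or> double_eigenvalue k x0 \<mu>)"
proof (intro allI impI)
  fix \<mu> assume ev: "is_eigenvalue k x0 \<mu>"
  have r: "Im \<mu> = 0 \<and> Re \<mu> < 0" by (rule eig_real[OF assms(2,3,1) ev])
  have "\<not> (\<mu> islimpt {\<nu>. is_eigenvalue k x0 \<nu>})" by (rule isolated[OF assms(2,3,1)])
  moreover have "\<mu> \<in> \<real>" using r by (simp add: complex_is_Real_iff)
  moreover have "simple_eigenvalue k x0 \<mu> \<or> double_eigenvalue k x0 \<mu>"
    by (rule simple_or_double[OF assms(2,3) ev])
  ultimately show "\<not> (\<mu> islimpt {\<nu>. is_eigenvalue k x0 \<nu>}) \<and>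
           \<mu> \<in> \<real> \<and> Re \<mu> < 0 \<and>
           (simple_eigenvalue k x0 \<mu> \<or> double_eigenvalue k x0 \<mu>)" using r by simp
qed

end
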